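(* Let $\boldsymbol t=(\boldsymbol u,\boldsymbol v)\in M$, $\overline{\boldsymbol\psi}=(\boldsymbol u,\theta_v(\boldsymbol t))$, and $\overline{\boldsymbol \theta}=\theta(\boldsymbol t)$. Then $\nabla_{\boldsymbol\psi} \ell(\overline{\boldsymbol\psi};\boldsymbol t)=\nabla_{\boldsymbol\psi} \check{\ell}(\overline{\boldsymbol\psi};\boldsymbol t)=\boldsymbol 0$ and $$ \nabla^2_{\boldsymbol\psi}\ell(\overline{\boldsymbol\psi};\boldsymbol t)\;=\;\nabla^2_{\boldsymbol\psi}\check{\ell}(\overline{\boldsymbol\psi};\boldsymbol t)\;=\;-\begin{bmatrix} {\rm var}(\boldsymbol u)^{-1} & \boldsymbol 0\\ \boldsymbol 0 & ({\rm var}(\boldsymbol t)^{vv})^{-1} \end{bmatrix}, $$ where ${\rm var}(\boldsymbol t)^{vv}$ stands for the $\boldsymbol v\boldsymbol v$-block of ${\rm var}(\boldsymbol t)^{-1}$ and the variance is computed with respect to $P_{\overline{\boldsymbol \theta}}$.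
   Context: Let $\mathcal{E}$ be a minimally represented regular exponential family with canonical parameter $\boldsymbol\theta\in\Theta$, cumulant function $A$, mean parameter $\boldsymbol\mu=\mu(\boldsymbol\theta)=\nabla A(\boldsymbol\theta)\in M$ and inverse map $\theta(\boldsymbol\mu)$. Split the sufficient statistic as $\boldsymbol t=(\boldsymbol u,\boldsymbol v)$ and use the mixed parametrization $\boldsymbol\psi=(\boldsymbol\mu_u,\boldsymbol\theta_v)$; $\theta_v(\boldsymbol\mu)$ denotes the $\boldsymbol v$-component of $\theta(\boldsymbol\mu)$. The log-likelihood is $\ell(\boldsymbol\theta;\boldsymbol t)=\langle\boldsymbol\theta,\boldsymbol t\rangle-A(\boldsymbol\theta)$ and, for fixed canonical parameter $\overline{\boldsymbol\theta}$, the dual log-likelihood is $\check\ell(\boldsymbol\mu;\overline{\boldsymbol\theta})=\langle\overline{\boldsymbol\theta},\boldsymbol\mu\rangle-A^*(\boldsymbol\mu)$ with $A^*$ the Fenchel conjugate of $A$; both are viewed as functions of the mixed parameter $\boldsymbol\psi$. In the expression $\check{\ell}(\boldsymbol\psi;\boldsymbol t)$ the fixed canonical parameter is $\overline{\boldsymbol\theta}=\theta(\boldsymbol t)$. *)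

theory Defs
  imports "HOL-Probability.Probability"
begin

text \<open>An exponential family is given by a base measure nu on the space of sufficient
statistics R^n (n indexed by a finite type), with densities exp(<theta,t> - A theta).
The sufficient statistic is split t = (u,v) by indexing R^n with the sum type 'p + 'q:
coordinates Inl i form u, coordinates Inr j form v.\<close>

definition nat_param_space :: "(real^'n) measure \<Rightarrow> (real^'n) set" where
  "nat_param_space \<nu> = {\<theta>. (\<integral>\<^sup>+ t. ennreal (exp (\<theta> \<bullet> t)) \<partial>\<nu>) < \<infinity>}"

definition cumulant :: "(real^'n) measure \<Rightarrow> real^'n \<Rightarrow> real" where
  "cumulant \<nu> \<theta> = ln (enn2real (\<integral>\<^sup>+ t. ennreal (exp (\<theta> \<bullet> t)) \<partial>\<nu>))"

definition ef_density :: "(real^'n) measure \<Rightarrow> real^'n \<Rightarrow> real^'n \<Rightarrow> real" where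
  "ef_density \<nu> \<theta> t = exp (\<theta> \<bullet> t - cumulant \<nu> \<theta>)"

definition mean_param :: "(real^'n) measure \<Rightarrow> real^'n \<Rightarrow> real^'n" where
  "mean_param \<nu> \<theta> = (\<chi> i. \<integral> t. t $ i * ef_density \<nu> \<theta> t \<partial>\<nu>)"

definition var_matrix :: "(real^'n) measure \<Rightarrow> real^'n \<Rightarrow> real^'n^'n" where
  "var_matrix \<nu> \<theta> = (\<chi> i j. \<integral> t. (t $ i - mean_param \<nu> \<theta> $ i) * (t $ j - mean_param \<nu> \<theta> $ j)
                                * ef_density \<nu> \<theta> t \<partial>\<nu>)"

definition mean_space :: "(real^'n) measure \<Rightarrow> (real^'n) set" where
  "mean_space \<nu> = mean_param \<nu> ` nat_param_space \<nu>"

definition canon_of_mean :: "(real^'n) measure \<Rightarrow> real^'n \<Rightarrow> real^'n" where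
  "canon_of_mean \<nu> \<mu> = (THE \<theta>. \<theta> \<in> nat_param_space \<nu> \<and> mean_param \<nu> \<theta> = \<mu>)"

definition regular_ef :: "(real^'n) measure \<Rightarrow> bool" where
  "regular_ef \<nu> \<longleftrightarrow> sets \<nu> = sets borel \<and> nat_param_space \<nu> \<noteq> {} \<and> open (nat_param_space \<nu>)"

definition minimal_ef :: "(real^'n) measure \<Rightarrow> bool" where
  "minimal_ef \<nu> \<longleftrightarrow> (\<forall>a c. (AE t in \<nu>. a \<bullet> t = c) \<longrightarrow> a = 0)"

text \<open>Fenchel conjugate of A (A = +infinity outside the natural parameter space).\<close>
definition fenchel_conj :: "(real^'n) measure \<Rightarrow> real^'n \<Rightarrow> real" where
  "fenchel_conj \<nu> \<mu> = (SUP \<theta>\<in>nat_param_space \<nu>. \<theta> \<bullet> \<mu> - cumulant \<nu> \<theta>)"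

text \<open>Mixed parametrization psi = (mu_u, theta_v) mapped back to the canonical parameter.\<close>
definition mixed_to_canon :: "(real^('p::finite+'q::finite)) measure \<Rightarrow> real^('p+'q) \<Rightarrow> real^('p+'q)" where
  "mixed_to_canon \<nu> \<psi> = (THE \<theta>. \<theta> \<in> nat_param_space \<nu> \<and>
      (\<forall>i. mean_param \<nu> \<theta> $ Inl i = \<psi> $ Inl i) \<and> (\<forall>j. \<theta> $ Inr j = \<psi> $ Inr j))"

definition loglik :: "(real^'n) measure \<Rightarrow> real^'n \<Rightarrow> real^'n \<Rightarrow> real" where
  "loglik \<nu> \<theta> t = \<theta> \<bullet> t - cumulant \<nu> \<theta>"

definition dual_loglik :: "(real^'n) measure \<Rightarrow> real^'n \<Rightarrow> real^'n \<Rightarrow> real" where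
  "dual_loglik \<nu> \<theta>bar \<mu> = \<theta>bar \<bullet> \<mu> - fenchel_conj \<nu> \<mu>"

definition mixed_loglik :: "(real^('p::finite+'q::finite)) measure \<Rightarrow> real^('p+'q) \<Rightarrow> real^('p+'q) \<Rightarrow> real" where
  "mixed_loglik \<nu> \<psi> t = loglik \<nu> (mixed_to_canon \<nu> \<psi>) t"

definition mixed_dual_loglik :: "(real^('p::finite+'q::finite)) measure \<Rightarrow> real^('p+'q) \<Rightarrow> real^('p+'q) \<Rightarrow> real" where
  "mixed_dual_loglik \<nu> \<psi> t = dual_loglik \<nu> (canon_of_mean \<nu> t) (mean_param \<nu> (mixed_to_canon \<nu> \<psi>))"

definition has_grad_hess :: "(real^'n \<Rightarrow> real) \<Rightarrow> real^'n \<Rightarrow> real^'n \<Rightarrow> real^'n^'n \<Rightarrow> bool" where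
  "has_grad_hess f x g H \<longleftrightarrow> (\<exists>G. (\<forall>\<^sub>F y in nhds x. (f has_derivative (\<lambda>h. G y \<bullet> h)) (at y))
       \<and> G x = g \<and> (G has_derivative (\<lambda>h. H *v h)) (at x))"

definition uu_block :: "real^('p::finite+'q::finite)^('p+'q) \<Rightarrow> real^'p^'p" where
  "uu_block M = (\<chi> i j. M $ Inl i $ Inl j)"

definition vv_block :: "real^('p::finite+'q::finite)^('p+'q) \<Rightarrow> real^'q^'q" where
  "vv_block M = (\<chi> i j. M $ Inr i $ Inr j)"

definition block_diag :: "real^'p::finite^'p \<Rightarrow> real^'q::finite^'q \<Rightarrow> real^('p+'q)^('p+'q)" where
  "block_diag P Q = (\<chi> k l. case (k, l) of (Inl i, Inl j) \<Rightarrow> P $ i $ j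
                                         | (Inr i, Inr j) \<Rightarrow> Q $ i $ j
                                         | _ \<Rightarrow> 0)"

end

theory Submission
  imports Defs
begin

lemma meas_borel:
  assumes "sets \<nu> = sets borel" "f \<in> borel_measurable borel"
  shows "f \<in> borel_measurable \<nu>"
  using assms measurable_cong_sets by blast

lemma exp_taylor2_bound: "\<bar>exp x - 1 - x\<bar> \<le> x\<^sup>2 * exp \<bar>x\<bar>" for x :: real
proof -
  obtain s where s: "\<bar>s\<bar> \<le> \<bar>x\<bar>" "exp x = (\<Sum>m<2. (x ^ m) / fact m) + (exp s / fact 2) * x ^ 2"
    using Maclaurin_exp_le[of x 2] by blast
  have e: "exp x - 1 - x = exp s / 2 * x^2" using s(2) by (simp add: numeral_2_eq_2)
  have n: "0 \<le> exp s / 2 * x^2" by simp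
  have "exp s \<le> exp \<bar>x\<bar>" using s(1) by simp
  then have "exp s / 2 \<le> exp \<bar>x\<bar>" using exp_gt_zero[of s] by linarith
  then have b: "exp s / 2 * x^2 \<le> exp \<bar>x\<bar> * x^2"
    by (intro mult_right_mono) auto
  have "\<bar>exp x - 1 - x\<bar> = exp s / 2 * x^2" by (subst e) (rule abs_of_nonneg[OF n])
  with b show ?thesis by (simp add: mult.commute)
qed

lemma integrable_exp_param:
  assumes "sets \<nu> = sets borel" "\<theta> \<in> nat_param_space \<nu>"
  shows "integrable \<nu> (\<lambda>t. exp (\<theta> \<bullet> t))"
proof (rule integrableI_bounded)
  show "(\<lambda>t. exp (\<theta> \<bullet> t)) \<in> borel_measurable \<nu>"
    by (rule meas_borel[OF assms(1)]) (intro borel_measurable_continuous_onI continuous_intros)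
  show "(\<integral>\<^sup>+ t. ennreal (norm (exp (\<theta> \<bullet> t))) \<partial>\<nu>) < \<infinity>"
    using assms(2) by (simp add: nat_param_space_def)
qed

lemma integrable_exp_norm:
  fixes \<nu> :: "(real^'n) measure"
  assumes sets: "sets \<nu> = sets borel" and opn: "open (nat_param_space \<nu>)"
    and th: "\<theta> \<in> nat_param_space \<nu>"
  shows "\<exists>\<delta>>0. integrable \<nu> (\<lambda>t. exp (\<theta> \<bullet> t + \<delta> * norm t))"
proof -
  obtain r where r: "r > 0" "ball \<theta> r \<subseteq> nat_param_space \<nu>"
    using opn th open_contains_ball by blast
  define \<delta> where "\<delta> = r / (real CARD('n) + 1)"
  have d0: "\<delta> > 0" using r by (simp add: \<delta>_def)
  define s :: "'n set \<Rightarrow> real^'n" where "s S = (\<chi> i. if i \<in> S then \<delta> else - \<delta>)" for S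
  have sin: "\<theta> + s S \<in> nat_param_space \<nu>" for S
  proof -
    have "norm (s S) \<le> (\<Sum>i\<in>UNIV. \<bar>s S $ i\<bar>)" by (rule norm_le_l1_cart)
    also have "\<dots> = real CARD('n) * \<delta>"
    proof -
      have "\<And>i. \<bar>s S $ i\<bar> = \<delta>" using d0 by (simp add: s_def)
      then show ?thesis by simp
    qed
    also have "\<dots> < r" using r d0 unfolding \<delta>_def
      by (simp add: field_simps)
    finally have "dist \<theta> (\<theta> + s S) < r" by (simp add: dist_norm)
    then show ?thesis using r by auto
  qed
  define D where "D t = (\<Sum>S\<in>UNIV. exp ((\<theta> + s S) \<bullet> t))" for t
  have intD: "integrable \<nu> D" unfolding D_def
    by (rule Bochner_Integration.integrable_sum) (rule integrable_exp_param[OF sets sin])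
  have "integrable \<nu> (\<lambda>t. exp (\<theta> \<bullet> t + \<delta> * norm t))"
  proof (rule Bochner_Integration.integrable_bound[OF intD])
    show "(\<lambda>t. exp (\<theta> \<bullet> t + \<delta> * norm t)) \<in> borel_measurable \<nu>"
      by (rule meas_borel[OF sets]) (intro borel_measurable_continuous_onI continuous_intros)
    show "AE t in \<nu>. norm (exp (\<theta> \<bullet> t + \<delta> * norm t)) \<le> norm (D t)"
    proof (rule AE_I2)
      fix t :: "real^'n"
      define S where "S = {i. t $ i \<ge> 0}"
      have "\<delta> * norm t \<le> \<delta> * (\<Sum>i\<in>UNIV. \<bar>t $ i\<bar>)"
        using d0 norm_le_l1_cart[of t] by (simp add: mult_left_mono)
      also have "\<dots> = s S \<bullet> t"
        unfolding inner_vec_def s_def S_def sum_distrib_left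
        by (intro sum.cong) auto
      finally have "exp (\<theta> \<bullet> t + \<delta> * norm t) \<le> exp ((\<theta> + s S) \<bullet> t)"
        by (simp add: inner_add_left)
      also have "\<dots> \<le> D t" unfolding D_def
        by (rule member_le_sum) auto
      finally show "norm (exp (\<theta> \<bullet> t + \<delta> * norm t)) \<le> norm (D t)" by simp
    qed
  qed
  then show ?thesis using d0 by blast
qed

lemma poly_exp_bound:
  assumes "(\<delta>::real) > 0"
  shows "\<exists>C. \<forall>x\<ge>0. (1 + x) ^ m \<le> C * exp (\<delta> * x)"
proof -
  have "(\<delta> * (1 + x)) ^ m / fact m \<le> exp (\<delta> * (1 + x))" if "x \<ge> 0" for x
  proof -
    obtain s where s: "exp (\<delta> * (1 + x)) = (\<Sum>k<Suc m. (\<delta> * (1 + x)) ^ k / fact k) + exp s / fact (Suc m) * (\<delta> * (1 + x)) ^ Suc m"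
      using Maclaurin_exp_le[of "\<delta> * (1 + x)" "Suc m"] by blast
    have "(\<delta> * (1 + x)) ^ m / fact m \<le> (\<Sum>k<Suc m. (\<delta> * (1 + x)) ^ k / fact k)"
      by (rule member_le_sum) (use that assms in auto)
    also have "\<dots> \<le> exp (\<delta> * (1 + x))"
      unfolding s using that assms by (intro add_increasing2) auto
    finally show ?thesis .
  qed
  then have "(1 + x) ^ m \<le> (fact m / \<delta> ^ m * exp \<delta>) * exp (\<delta> * x)" if x: "x \<ge> 0" for x
  proof -
    have dm: "\<delta> ^ m > 0" using assms by simp
    have "\<delta> ^ m * (1 + x) ^ m \<le> fact m * exp (\<delta> * (1 + x))"
      using \<open>\<And>x. 0 \<le> x \<Longrightarrow> (\<delta> * (1 + x)) ^ m / fact m \<le> exp (\<delta> * (1 + x))\<close>[OF x]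
      by (simp add: power_mult_distrib divide_le_eq mult.commute)
    also have "exp (\<delta> * (1 + x)) = exp \<delta> * exp (\<delta> * x)"
      by (simp add: distrib_left exp_add)
    finally have "\<delta> ^ m * (1 + x) ^ m \<le> fact m * (exp \<delta> * exp (\<delta> * x))" .
    then show ?thesis using dm by (simp add: field_simps)
  qed
  then show ?thesis by blast
qed

lemma integrable_poly_exp:
  fixes \<nu> :: "(real^'n) measure"
  assumes sets: "sets \<nu> = sets borel" and opn: "open (nat_param_space \<nu>)"
    and th: "\<theta> \<in> nat_param_space \<nu>"
  shows "\<exists>\<delta>>0. \<forall>m. integrable \<nu> (\<lambda>t. (1 + norm t) ^ m * exp (\<theta> \<bullet> t + \<delta> * norm t))"
proof -
  obtain \<delta> where d: "\<delta> > 0" "integrable \<nu> (\<lambda>t. exp (\<theta> \<bullet> t + \<delta> * norm t))"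
    using integrable_exp_norm[OF assms] by blast
  have "integrable \<nu> (\<lambda>t. (1 + norm t) ^ m * exp (\<theta> \<bullet> t + \<delta>/2 * norm t))" for m
  proof -
    obtain C where C: "\<forall>x\<ge>0. (1 + x) ^ m \<le> C * exp (\<delta>/2 * x)"
      using poly_exp_bound[of "\<delta>/2" m] d by auto
    have intC: "integrable \<nu> (\<lambda>t. C * exp (\<theta> \<bullet> t + \<delta> * norm t))" using d by auto
    show ?thesis
    proof (rule Bochner_Integration.integrable_bound[OF intC])
      show "(\<lambda>t. (1 + norm t) ^ m * exp (\<theta> \<bullet> t + \<delta>/2 * norm t)) \<in> borel_measurable \<nu>"
        by (rule meas_borel[OF sets]) (intro borel_measurable_continuous_onI continuous_intros)
      show "AE t in \<nu>. norm ((1 + norm t) ^ m * exp (\<theta> \<bullet> t + \<delta>/2 * norm t)) \<le> norm (C * exp (\<theta> \<bullet> t + \<delta> * norm t))"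
      proof (rule AE_I2)
        fix t :: "real^'n"
        have "(1 + norm t) ^ m * exp (\<theta> \<bullet> t + \<delta>/2 * norm t) \<le> C * exp (\<delta>/2 * norm t) * exp (\<theta> \<bullet> t + \<delta>/2 * norm t)"
          using C by (intro mult_right_mono) auto
        also have "\<dots> = C * exp (\<theta> \<bullet> t + \<delta> * norm t)"
          by (simp add: exp_add[symmetric] algebra_simps)
        finally show "norm ((1 + norm t) ^ m * exp (\<theta> \<bullet> t + \<delta>/2 * norm t)) \<le> norm (C * exp (\<theta> \<bullet> t + \<delta> * norm t))"
          by simp
      qed
    qed
  qed
  then show ?thesis using d by (intro exI[of _ "\<delta>/2"]) auto
qed

lemma quad_deriv:
  fixes f :: "'a::real_normed_vector \<Rightarrow> 'b::real_normed_vector"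
  assumes bl: "bounded_linear D" and d: "d > 0"
    and bnd: "\<And>h. norm h < d \<Longrightarrow> norm (f (x + h) - f x - D h) \<le> C * (norm h)^2"
  shows "(f has_derivative D) (at x)"
  unfolding has_derivative_at
proof (intro conjI bl)
  have ev: "\<forall>\<^sub>F h in at 0. norm (norm (f (x + h) - f x - D h) / norm h) \<le> C * norm h"
  proof -
    have "\<forall>\<^sub>F h in at (0::'a). norm h < d"
      using d by (intro eventually_at_in_open' [THEN eventually_mono, of "ball 0 d"]) auto
    then show ?thesis
    proof (rule eventually_mono)
      fix h :: 'a assume h: "norm h < d"
      show "norm (norm (f (x + h) - f x - D h) / norm h) \<le> C * norm h"
      proof (cases "h = 0")
        case True then show ?thesis by simp
      next
        case False
        then have "norm (f (x + h) - f x - D h) / norm h \<le> C * (norm h)^2 / norm h"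
          using bnd[OF h] by (intro divide_right_mono) auto
        also have "\<dots> = C * norm h" using False by (simp add: power2_eq_square)
        finally show ?thesis by simp
      qed
    qed
  qed
  have "((\<lambda>h::'a. norm h) \<longlongrightarrow> 0) (at 0)"
    using tendsto_norm_zero[OF tendsto_ident_at[of "0::'a" UNIV]] by simp
  then have "((\<lambda>h. C * norm h) \<longlongrightarrow> 0) (at (0::'a))" by (rule tendsto_mult_right_zero)
  then show "(\<lambda>h. norm (f (x + h) - f x - D h) / norm h) \<midarrow>0\<rightarrow> 0"
    by (rule Lim_null_comparison[OF ev])
qed

definition Fm :: "(real^'n) measure \<Rightarrow> (real^'n \<Rightarrow> real) \<Rightarrow> real^'n \<Rightarrow> real" where
  "Fm \<nu> g \<theta> = (\<integral>t. g t * exp (\<theta> \<bullet> t) \<partial>\<nu>)"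

lemma integrable_Fm_near:
  fixes \<nu> :: "(real^'n) measure"
  assumes sets: "sets \<nu> = sets borel"
    and g: "g \<in> borel_measurable borel" "\<And>t. \<bar>g t\<bar> \<le> (1 + norm t) ^ k"
    and B: "integrable \<nu> (\<lambda>t. (1 + norm t) ^ k * exp (\<theta> \<bullet> t + \<delta> * norm t))"
    and h: "norm h \<le> \<delta>"
  shows "integrable \<nu> (\<lambda>t. g t * exp ((\<theta> + h) \<bullet> t))"
proof (rule Bochner_Integration.integrable_bound[OF B])
  show "(\<lambda>t. g t * exp ((\<theta> + h) \<bullet> t)) \<in> borel_measurable \<nu>"
    by (rule meas_borel[OF sets]) (intro borel_measurable_times g borel_measurable_continuous_onI continuous_intros)
  show "AE t in \<nu>. norm (g t * exp ((\<theta> + h) \<bullet> t)) \<le> norm ((1 + norm t) ^ k * exp (\<theta> \<bullet> t + \<delta> * norm t))"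
  proof (rule AE_I2)
    fix t :: "real^'n"
    have "h \<bullet> t \<le> norm h * norm t" by (rule norm_cauchy_schwarz)
    also have "\<dots> \<le> \<delta> * norm t" using h by (intro mult_right_mono) auto
    finally have "exp ((\<theta> + h) \<bullet> t) \<le> exp (\<theta> \<bullet> t + \<delta> * norm t)" by (simp add: inner_add_left)
    then have "\<bar>g t\<bar> * exp ((\<theta> + h) \<bullet> t) \<le> (1 + norm t) ^ k * exp (\<theta> \<bullet> t + \<delta> * norm t)"
      using g(2)[of t] by (intro mult_mono) auto
    then show "norm (g t * exp ((\<theta> + h) \<bullet> t)) \<le> norm ((1 + norm t) ^ k * exp (\<theta> \<bullet> t + \<delta> * norm t))"
      by (simp add: abs_mult)
  qed
qed

lemma poly_bound_mono:
  fixes t :: "real^'n"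
  assumes "k \<le> m" shows "(1 + norm t) ^ k \<le> (1 + norm t) ^ m"
  using assms by (intro power_increasing) auto

lemma deriv_Fm:
  fixes \<nu> :: "(real^'n) measure"
  assumes sets: "sets \<nu> = sets borel" and opn: "open (nat_param_space \<nu>)"
    and th: "\<theta> \<in> nat_param_space \<nu>"
    and gm: "g \<in> borel_measurable borel" and gb: "\<And>t. \<bar>g t\<bar> \<le> (1 + norm t) ^ k"
  shows "(Fm \<nu> g has_derivative (\<lambda>h. h \<bullet> (\<chi> i. Fm \<nu> (\<lambda>t. g t * t $ i) \<theta>))) (at \<theta>)"
proof -
  obtain \<delta> where d: "\<delta> > 0" and B: "\<And>m. integrable \<nu> (\<lambda>t. (1 + norm t) ^ m * exp (\<theta> \<bullet> t + \<delta> * norm t))"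
    using integrable_poly_exp[OF sets opn th] by blast
  have gi: "\<And>i. (\<lambda>t. g t * t $ i) \<in> borel_measurable borel"
    by (rule borel_measurable_times[OF gm]) (intro borel_measurable_continuous_onI continuous_intros)
  have gib: "\<bar>g t * t $ i\<bar> \<le> (1 + norm t) ^ Suc k" for t i
  proof -
    have "\<bar>t $ i\<bar> \<le> 1 + norm t" using component_le_norm_cart[of t i] by simp
    then have "\<bar>g t\<bar> * \<bar>t $ i\<bar> \<le> (1 + norm t) ^ k * (1 + norm t)"
      using gb[of t] by (intro mult_mono) auto
    then show ?thesis by (simp add: abs_mult mult.commute)
  qed
  have int0: "integrable \<nu> (\<lambda>t. g t * exp ((\<theta> + h) \<bullet> t))" if "norm h \<le> \<delta>" for h
    by (rule integrable_Fm_near[OF sets gm gb B that])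
  have inti: "integrable \<nu> (\<lambda>t. g t * t $ i * exp (\<theta> \<bullet> t))" for i
    using integrable_Fm_near[OF sets gi gib B, of 0 i] d by simp
  define L where "L h = h \<bullet> (\<chi> i. Fm \<nu> (\<lambda>t. g t * t $ i) \<theta>)" for h
  have L_eq: "L h = (\<integral>t. g t * (h \<bullet> t) * exp (\<theta> \<bullet> t) \<partial>\<nu>)" for h
  proof -
    have "L h = (\<Sum>i\<in>UNIV. h $ i * (\<integral>t. g t * t $ i * exp (\<theta> \<bullet> t) \<partial>\<nu>))"
      by (simp add: L_def inner_vec_def Fm_def)
    also have "\<dots> = (\<Sum>i\<in>UNIV. (\<integral>t. h $ i * (g t * t $ i * exp (\<theta> \<bullet> t)) \<partial>\<nu>))"
      by simp
    also have "\<dots> = (\<integral>t. (\<Sum>i\<in>UNIV. h $ i * (g t * t $ i * exp (\<theta> \<bullet> t))) \<partial>\<nu>)"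
      by (rule Bochner_Integration.integral_sum[symmetric]) (use inti in auto)
    also have "\<dots> = (\<integral>t. g t * (h \<bullet> t) * exp (\<theta> \<bullet> t) \<partial>\<nu>)"
      by (intro Bochner_Integration.integral_cong refl)
         (simp add: inner_vec_def sum_distrib_left sum_distrib_right mult_ac)
    finally show ?thesis .
  qed
  have intL: "integrable \<nu> (\<lambda>t. g t * (h \<bullet> t) * exp (\<theta> \<bullet> t))" for h
  proof -
    have "integrable \<nu> (\<lambda>t. (\<Sum>i\<in>UNIV. h $ i * (g t * t $ i * exp (\<theta> \<bullet> t))))"
      by (rule Bochner_Integration.integrable_sum) (use inti in auto)
    moreover have "(\<lambda>t. (\<Sum>i\<in>UNIV. h $ i * (g t * t $ i * exp (\<theta> \<bullet> t)))) = (\<lambda>t. g t * (h \<bullet> t) * exp (\<theta> \<bullet> t))"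
      by (auto simp: inner_vec_def sum_distrib_left sum_distrib_right mult_ac)
    ultimately show ?thesis by simp
  qed
  define C where "C = (\<integral>t. (1 + norm t) ^ (k + 2) * exp (\<theta> \<bullet> t + \<delta> * norm t) \<partial>\<nu>)"
  show ?thesis
  proof (rule quad_deriv[where d=\<delta> and C=C, OF _ d], fold L_def)
    show "bounded_linear L" unfolding L_def by (intro bounded_linear_intros)
    fix h :: "real^'n" assume h: "norm h < \<delta>"
    have "Fm \<nu> g (\<theta> + h) - Fm \<nu> g \<theta> - L h
        = (\<integral>t. g t * exp ((\<theta> + h) \<bullet> t) - g t * exp (\<theta> \<bullet> t) - g t * (h \<bullet> t) * exp (\<theta> \<bullet> t) \<partial>\<nu>)"
      unfolding L_eq Fm_def using int0[of h] int0[of 0] intL[of h] h d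
      by (subst Bochner_Integration.integral_diff; simp)+
    also have "\<dots> = (\<integral>t. g t * exp (\<theta> \<bullet> t) * (exp (h \<bullet> t) - 1 - h \<bullet> t) \<partial>\<nu>)"
      by (intro Bochner_Integration.integral_cong refl)
         (simp add: inner_add_left exp_add algebra_simps)
    finally have eq: "Fm \<nu> g (\<theta> + h) - Fm \<nu> g \<theta> - L h = (\<integral>t. g t * exp (\<theta> \<bullet> t) * (exp (h \<bullet> t) - 1 - h \<bullet> t) \<partial>\<nu>)" .
    have pt: "\<bar>g t * exp (\<theta> \<bullet> t) * (exp (h \<bullet> t) - 1 - h \<bullet> t)\<bar>
              \<le> (norm h)^2 * ((1 + norm t) ^ (k + 2) * exp (\<theta> \<bullet> t + \<delta> * norm t))" for t
    proof -
      have hs: "\<bar>h \<bullet> t\<bar> \<le> norm h * norm t" by (rule Cauchy_Schwarz_ineq2)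
      then have hs2: "\<bar>h \<bullet> t\<bar> \<le> \<delta> * norm t" using h by (smt (verit) mult_right_mono norm_ge_zero)
      have "\<bar>exp (h \<bullet> t) - 1 - h \<bullet> t\<bar> \<le> (h \<bullet> t)\<^sup>2 * exp \<bar>h \<bullet> t\<bar>" by (rule exp_taylor2_bound)
      also have "\<dots> \<le> (norm h * norm t)\<^sup>2 * exp (\<delta> * norm t)"
        using hs hs2 by (intro mult_mono) (auto simp: abs_le_square_iff[symmetric] power2_abs)
      finally have e1: "\<bar>exp (h \<bullet> t) - 1 - h \<bullet> t\<bar> \<le> (norm h)\<^sup>2 * ((norm t)\<^sup>2 * exp (\<delta> * norm t))"
        by (simp add: power_mult_distrib)
      have nt: "(norm t)\<^sup>2 \<le> (1 + norm t)^2" by (simp add: power_mono)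
      have e2: "\<bar>exp (h \<bullet> t) - 1 - h \<bullet> t\<bar> \<le> (norm h)\<^sup>2 * ((1 + norm t)\<^sup>2 * exp (\<delta> * norm t))"
        using e1 nt by (smt (verit) exp_gt_zero mult_left_mono mult_right_mono zero_le_power2)
      have "\<bar>g t * exp (\<theta> \<bullet> t) * (exp (h \<bullet> t) - 1 - h \<bullet> t)\<bar>
            = \<bar>g t\<bar> * exp (\<theta> \<bullet> t) * \<bar>exp (h \<bullet> t) - 1 - h \<bullet> t\<bar>" by (simp add: abs_mult)
      also have "\<dots> \<le> (1 + norm t) ^ k * exp (\<theta> \<bullet> t) * ((norm h)\<^sup>2 * ((1 + norm t)\<^sup>2 * exp (\<delta> * norm t)))"
        using gb[of t] e2 by (intro mult_mono) auto
      also have "\<dots> = (norm h)^2 * ((1 + norm t) ^ (k + 2) * exp (\<theta> \<bullet> t + \<delta> * norm t))"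
        by (simp add: exp_add power_add mult_ac power2_eq_square)
      finally show ?thesis .
    qed
    have intE: "integrable \<nu> (\<lambda>t. g t * exp (\<theta> \<bullet> t) * (exp (h \<bullet> t) - 1 - h \<bullet> t))"
    proof -
      have "integrable \<nu> (\<lambda>t. g t * exp ((\<theta> + h) \<bullet> t) - g t * exp (\<theta> \<bullet> t) - g t * (h \<bullet> t) * exp (\<theta> \<bullet> t))"
        using int0[of h] int0[of 0] intL[of h] h d by auto
      moreover have "(\<lambda>t. g t * exp ((\<theta> + h) \<bullet> t) - g t * exp (\<theta> \<bullet> t) - g t * (h \<bullet> t) * exp (\<theta> \<bullet> t))
         = (\<lambda>t. g t * exp (\<theta> \<bullet> t) * (exp (h \<bullet> t) - 1 - h \<bullet> t))"
        by (auto simp: inner_add_left exp_add algebra_simps)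
      ultimately show ?thesis by simp
    qed
    have iB: "integrable \<nu> (\<lambda>t. (norm h)^2 * ((1 + norm t) ^ (k + 2) * exp (\<theta> \<bullet> t + \<delta> * norm t)))"
      using B[of "k+2"] by simp
    have "norm (Fm \<nu> g (\<theta> + h) - Fm \<nu> g \<theta> - L h)
          \<le> (\<integral>t. (norm h)^2 * ((1 + norm t) ^ (k + 2) * exp (\<theta> \<bullet> t + \<delta> * norm t)) \<partial>\<nu>)"
      unfolding eq real_norm_def
      by (rule integral_abs_bound_integral[OF intE iB]) (rule pt)
    also have "\<dots> = C * (norm h)^2" by (simp add: C_def mult.commute)
    finally show "norm (Fm \<nu> g (\<theta> + h) - Fm \<nu> g \<theta> - L h) \<le> C * (norm h)^2" .
  qed
qed

lemma has_derivative_cart_comp: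
  fixes f :: "'a::real_normed_vector \<Rightarrow> real^'m"
  assumes "\<And>i. ((\<lambda>x. f x $ i) has_derivative (\<lambda>h. f' h $ i)) (at a)"
  shows "(f has_derivative f') (at a)"
  using assms
  by (subst has_derivative_componentwise_within) (auto simp: Basis_vec_def inner_axis)

definition Zf :: "(real^'n) measure \<Rightarrow> real^'n \<Rightarrow> real" where
  "Zf \<nu> \<theta> = Fm \<nu> (\<lambda>_. 1) \<theta>"
definition Mf :: "(real^'n) measure \<Rightarrow> real^'n \<Rightarrow> real^'n" where
  "Mf \<nu> \<theta> = (\<chi> i. Fm \<nu> (\<lambda>t. t $ i) \<theta>)"
definition Sf :: "(real^'n) measure \<Rightarrow> real^'n \<Rightarrow> real^'n^'n" where
  "Sf \<nu> \<theta> = (\<chi> i j. Fm \<nu> (\<lambda>t. t $ i * t $ j) \<theta>)"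
definition muf :: "(real^'n) measure \<Rightarrow> real^'n \<Rightarrow> real^'n" where
  "muf \<nu> \<theta> = (\<chi> i. Mf \<nu> \<theta> $ i / Zf \<nu> \<theta>)"
definition Vf :: "(real^'n) measure \<Rightarrow> real^'n \<Rightarrow> real^'n^'n" where
  "Vf \<nu> \<theta> = (\<chi> i j. Sf \<nu> \<theta> $ i $ j / Zf \<nu> \<theta> - muf \<nu> \<theta> $ i * muf \<nu> \<theta> $ j)"

locale EF =
  fixes \<nu> :: "(real^'n::finite) measure"
  assumes sets: "sets \<nu> = sets borel"
    and opn: "open (nat_param_space \<nu>)"
    and minimal: "minimal_ef \<nu>"
begin

abbreviation "N \<equiv> nat_param_space \<nu>"

lemma int_Fm:
  assumes th: "\<theta> \<in> N" and gm: "g \<in> borel_measurable borel" and gb: "\<And>t. \<bar>g t\<bar> \<le> (1 + norm t) ^ k"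
  shows "integrable \<nu> (\<lambda>t. g t * exp (\<theta> \<bullet> t))"
proof -
  obtain \<delta> where d: "\<delta> > 0" and B: "\<And>m. integrable \<nu> (\<lambda>t. (1 + norm t) ^ m * exp (\<theta> \<bullet> t + \<delta> * norm t))"
    using integrable_poly_exp[OF sets opn th] by blast
  show ?thesis using integrable_Fm_near[OF sets gm gb B, of 0] d by simp
qed

lemma comp_bound: "\<bar>(t::real^'n) $ i\<bar> \<le> (1 + norm t) ^ 1"
  using component_le_norm_cart[of t i] by simp

lemma comp2_bound: "\<bar>(t::real^'n) $ i * t $ j\<bar> \<le> (1 + norm t) ^ 2"
proof -
  have "\<bar>t $ i\<bar> * \<bar>t $ j\<bar> \<le> (1 + norm t) * (1 + norm t)"
    using comp_bound[of t i] comp_bound[of t j] by (intro mult_mono) auto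
  then show ?thesis by (simp add: abs_mult power2_eq_square)
qed

lemma meas_comp: "(\<lambda>t::real^'n. t $ i) \<in> borel_measurable borel"
  by (intro borel_measurable_continuous_onI continuous_intros)
lemma meas_comp2: "(\<lambda>t::real^'n. t $ i * t $ j) \<in> borel_measurable borel"
  by (intro borel_measurable_continuous_onI continuous_intros)

lemma int_exp: "\<theta> \<in> N \<Longrightarrow> integrable \<nu> (\<lambda>t. exp (\<theta> \<bullet> t))"
  using int_Fm[of \<theta> "\<lambda>_. 1" 0] by simp
lemma int_t: "\<theta> \<in> N \<Longrightarrow> integrable \<nu> (\<lambda>t. t $ i * exp (\<theta> \<bullet> t))"
  using int_Fm[OF _ meas_comp comp_bound] .
lemma int_tt: "\<theta> \<in> N \<Longrightarrow> integrable \<nu> (\<lambda>t. t $ i * t $ j * exp (\<theta> \<bullet> t))"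
  using int_Fm[OF _ meas_comp2 comp2_bound] .

lemma not_null: "\<not> (AE t in \<nu>. False)"
proof
  assume "AE t in \<nu>. False"
  then have "AE t in \<nu>. axis undefined (1::real) \<bullet> t = 0" by (rule eventually_mono) auto
  then have "axis undefined (1::real) = (0 :: real^'n)" using minimal unfolding minimal_ef_def by blast
  then show False by simp
qed

lemma Z_pos: assumes "\<theta> \<in> N" shows "Zf \<nu> \<theta> > 0"
proof -
  have ge: "Zf \<nu> \<theta> \<ge> 0" unfolding Zf_def Fm_def by (intro integral_nonneg_AE) auto
  have "Zf \<nu> \<theta> \<noteq> 0"
  proof
    assume "Zf \<nu> \<theta> = 0"
    then have "(\<integral>t. exp (\<theta> \<bullet> t) \<partial>\<nu>) = 0" by (simp add: Zf_def Fm_def)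
    then have "AE t in \<nu>. exp (\<theta> \<bullet> t) = 0"
      using integral_nonneg_eq_0_iff_AE[OF int_exp[OF assms]] by auto
    then have "AE t in \<nu>. False" by simp
    then show False using not_null by simp
  qed
  then show ?thesis using ge by simp
qed

lemma cumulant_eq: assumes "\<theta> \<in> N" shows "cumulant \<nu> \<theta> = ln (Zf \<nu> \<theta>)"
proof -
  have "(\<integral>\<^sup>+ t. ennreal (exp (\<theta> \<bullet> t)) \<partial>\<nu>) = ennreal (\<integral>t. exp (\<theta> \<bullet> t) \<partial>\<nu>)"
    by (rule nn_integral_eq_integral[OF int_exp[OF assms]]) auto
  moreover have "(\<integral>t. exp (\<theta> \<bullet> t) \<partial>\<nu>) = Zf \<nu> \<theta>" by (simp add: Zf_def Fm_def)
  ultimately show ?thesis using Z_pos[OF assms] by (simp add: cumulant_def)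
qed

lemma density_eq: assumes "\<theta> \<in> N" shows "ef_density \<nu> \<theta> t = exp (\<theta> \<bullet> t) / Zf \<nu> \<theta>"
  using Z_pos[OF assms] by (simp add: ef_density_def cumulant_eq[OF assms] exp_diff)

lemma mean_eq: assumes "\<theta> \<in> N" shows "mean_param \<nu> \<theta> = muf \<nu> \<theta>"
  unfolding mean_param_def muf_def Mf_def Zf_def
  by (simp add: density_eq[OF assms] Zf_def Fm_def)

lemma var_eq: assumes th: "\<theta> \<in> N" shows "var_matrix \<nu> \<theta> = Vf \<nu> \<theta>"
proof -
  have "var_matrix \<nu> \<theta> $ i $ j = Vf \<nu> \<theta> $ i $ j" for i j
  proof -
    define m where "m = muf \<nu> \<theta>"
    define Z where "Z = Zf \<nu> \<theta>"
    have Z0: "Z > 0" using Z_pos[OF th] by (simp add: Z_def)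
    have "var_matrix \<nu> \<theta> $ i $ j = (\<integral>t. (t $ i - m $ i) * (t $ j - m $ j) * (exp (\<theta> \<bullet> t) / Z) \<partial>\<nu>)"
      by (simp add: var_matrix_def mean_eq[OF th] density_eq[OF th] m_def Z_def)
    also have "\<dots> = (\<integral>t. (t $ i * t $ j * exp (\<theta> \<bullet> t) - m $ j * (t $ i * exp (\<theta> \<bullet> t))
                      - m $ i * (t $ j * exp (\<theta> \<bullet> t)) + m $ i * m $ j * exp (\<theta> \<bullet> t)) / Z \<partial>\<nu>)"
      by (intro Bochner_Integration.integral_cong refl) (simp add: field_simps)
    also have "\<dots> = ((\<integral>t. t $ i * t $ j * exp (\<theta> \<bullet> t) \<partial>\<nu>) - m $ j * (\<integral>t. t $ i * exp (\<theta> \<bullet> t) \<partial>\<nu>)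
                      - m $ i * (\<integral>t. t $ j * exp (\<theta> \<bullet> t) \<partial>\<nu>) + m $ i * m $ j * (\<integral>t. exp (\<theta> \<bullet> t) \<partial>\<nu>)) / Z"
      using int_tt[OF th, of i j] int_t[OF th, of i] int_t[OF th, of j] int_exp[OF th]
      by (simp add: Bochner_Integration.integral_diff Bochner_Integration.integral_add)
    also have "\<dots> = (Sf \<nu> \<theta> $ i $ j - m $ j * Mf \<nu> \<theta> $ i - m $ i * Mf \<nu> \<theta> $ j + m $ i * m $ j * Z) / Z"
      by (simp add: Sf_def Mf_def Zf_def Fm_def Z_def)
    also have "\<dots> = Vf \<nu> \<theta> $ i $ j"
      using Z0 by (simp add: Vf_def m_def muf_def Z_def field_simps)
    finally show ?thesis .
  qed
  then show ?thesis by (simp add: vec_eq_iff)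
qed

lemma deriv_Z: assumes "\<theta> \<in> N" shows "(Zf \<nu> has_derivative (\<lambda>h. h \<bullet> Mf \<nu> \<theta>)) (at \<theta>)"
proof -
  have "(Fm \<nu> (\<lambda>_. 1) has_derivative (\<lambda>h. h \<bullet> (\<chi> i. Fm \<nu> (\<lambda>t. 1 * t $ i) \<theta>))) (at \<theta>)"
    by (rule deriv_Fm[OF sets opn assms, of _ 0]) auto
  then show ?thesis by (simp add: Zf_def[abs_def] Mf_def)
qed

lemma deriv_M: assumes "\<theta> \<in> N" shows "(Mf \<nu> has_derivative (\<lambda>h. Sf \<nu> \<theta> *v h)) (at \<theta>)"
proof (rule has_derivative_cart_comp)
  fix i
  have "(Fm \<nu> (\<lambda>t. t $ i) has_derivative (\<lambda>h. h \<bullet> (\<chi> j. Fm \<nu> (\<lambda>t. t $ i * t $ j) \<theta>))) (at \<theta>)"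
    by (rule deriv_Fm[OF sets opn assms meas_comp comp_bound])
  moreover have "(\<lambda>h. h \<bullet> (\<chi> j. Fm \<nu> (\<lambda>t. t $ i * t $ j) \<theta>)) = (\<lambda>h. (Sf \<nu> \<theta> *v h) $ i)"
    by (auto simp: Sf_def matrix_vector_mult_def inner_vec_def mult.commute)
  ultimately show "((\<lambda>x. Mf \<nu> x $ i) has_derivative (\<lambda>h. (Sf \<nu> \<theta> *v h) $ i)) (at \<theta>)"
    by (simp add: Mf_def)
qed

lemma cont_S: assumes "\<theta> \<in> N" shows "isCont (Sf \<nu>) \<theta>"
proof -
  have "isCont (Fm \<nu> (\<lambda>t. t $ i * t $ j)) \<theta>" for i j
    by (rule has_derivative_continuous[OF deriv_Fm[OF sets opn assms meas_comp2 comp2_bound]])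
  then show ?thesis unfolding Sf_def continuous_at
    by (intro tendsto_vec_lambda) (auto simp: continuous_at)
qed

lemma cont_Z: "\<theta> \<in> N \<Longrightarrow> isCont (Zf \<nu>) \<theta>"
  by (rule has_derivative_continuous[OF deriv_Z])
lemma cont_M: "\<theta> \<in> N \<Longrightarrow> isCont (Mf \<nu>) \<theta>"
  by (rule has_derivative_continuous[OF deriv_M])

lemma cont_mu: assumes "\<theta> \<in> N" shows "isCont (muf \<nu>) \<theta>"
proof -
  have "isCont (\<lambda>x. Mf \<nu> x $ i / Zf \<nu> x) \<theta>" for i
    using cont_M[OF assms] cont_Z[OF assms] Z_pos[OF assms]
    by (intro continuous_intros) auto
  then show ?thesis unfolding muf_def continuous_at
    by (intro tendsto_vec_lambda) (auto simp: continuous_at)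
qed

lemma cont_V: assumes "\<theta> \<in> N" shows "isCont (Vf \<nu>) \<theta>"
proof -
  have "isCont (\<lambda>x. Sf \<nu> x $ i $ j / Zf \<nu> x - muf \<nu> x $ i * muf \<nu> x $ j) \<theta>" for i j
    using cont_S[OF assms] cont_Z[OF assms] Z_pos[OF assms] cont_mu[OF assms]
    by (intro continuous_intros) auto
  then show ?thesis unfolding Vf_def continuous_at
    by (intro tendsto_vec_lambda) (auto simp: continuous_at)
qed

lemma deriv_mu: assumes th: "\<theta> \<in> N" shows "(muf \<nu> has_derivative (\<lambda>h. Vf \<nu> \<theta> *v h)) (at \<theta>)"
proof (rule has_derivative_cart_comp)
  fix i
  have dMi: "((\<lambda>x. Mf \<nu> x $ i) has_derivative (\<lambda>h. (Sf \<nu> \<theta> *v h) $ i)) (at \<theta>)"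
    using bounded_linear.has_derivative[OF bounded_linear_vec_nth deriv_M[OF th]] .
  have Z0: "Zf \<nu> \<theta> \<noteq> 0" using Z_pos[OF th] by simp
  have "((\<lambda>x. Mf \<nu> x $ i / Zf \<nu> x) has_derivative
      (\<lambda>h. - Mf \<nu> \<theta> $ i * (inverse (Zf \<nu> \<theta>) * (h \<bullet> Mf \<nu> \<theta>) * inverse (Zf \<nu> \<theta>)) + (Sf \<nu> \<theta> *v h) $ i / Zf \<nu> \<theta>)) (at \<theta>)"
    by (rule has_derivative_divide[OF dMi deriv_Z[OF th] Z0])
  moreover have "(\<lambda>h. - Mf \<nu> \<theta> $ i * (inverse (Zf \<nu> \<theta>) * (h \<bullet> Mf \<nu> \<theta>) * inverse (Zf \<nu> \<theta>)) + (Sf \<nu> \<theta> *v h) $ i / Zf \<nu> \<theta>)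
      = (\<lambda>h. (Vf \<nu> \<theta> *v h) $ i)"
  proof
    fix h
    have "(Vf \<nu> \<theta> *v h) $ i = (\<Sum>j\<in>UNIV. (Sf \<nu> \<theta> $ i $ j / Zf \<nu> \<theta> - muf \<nu> \<theta> $ i * muf \<nu> \<theta> $ j) * h $ j)"
      by (simp add: Vf_def matrix_vector_mult_def)
    also have "\<dots> = (\<Sum>j\<in>UNIV. Sf \<nu> \<theta> $ i $ j * h $ j) / Zf \<nu> \<theta> - muf \<nu> \<theta> $ i * (\<Sum>j\<in>UNIV. muf \<nu> \<theta> $ j * h $ j)"
      by (simp add: sum_subtractf[symmetric] sum_divide_distrib sum_distrib_left algebra_simps)
    also have "\<dots> = - Mf \<nu> \<theta> $ i * (inverse (Zf \<nu> \<theta>) * (h \<bullet> Mf \<nu> \<theta>) * inverse (Zf \<nu> \<theta>)) + (Sf \<nu> \<theta> *v h) $ i / Zf \<nu> \<theta>"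
      using Z0 by (simp add: muf_def matrix_vector_mult_def inner_vec_def field_simps sum_divide_distrib sum_distrib_left sum_negf)
    finally show "- Mf \<nu> \<theta> $ i * (inverse (Zf \<nu> \<theta>) * (h \<bullet> Mf \<nu> \<theta>) * inverse (Zf \<nu> \<theta>)) + (Sf \<nu> \<theta> *v h) $ i / Zf \<nu> \<theta> = (Vf \<nu> \<theta> *v h) $ i" by simp
  qed
  ultimately show "((\<lambda>x. muf \<nu> x $ i) has_derivative (\<lambda>h. (Vf \<nu> \<theta> *v h) $ i)) (at \<theta>)"
    by (simp add: muf_def)
qed

lemma deriv_mean: assumes th: "\<theta> \<in> N" shows "(mean_param \<nu> has_derivative (\<lambda>h. Vf \<nu> \<theta> *v h)) (at \<theta>)"
  by (rule has_derivative_transform_within_open[OF deriv_mu[OF th] opn th]) (simp add: mean_eq)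

lemma deriv_cumulant: assumes th: "\<theta> \<in> N" shows "(cumulant \<nu> has_derivative (\<lambda>h. h \<bullet> muf \<nu> \<theta>)) (at \<theta>)"
proof -
  have Z0: "Zf \<nu> \<theta> > 0" using Z_pos[OF th] by simp
  have "((\<lambda>x. ln (Zf \<nu> x)) has_derivative (\<lambda>h. inverse (Zf \<nu> \<theta>) * (h \<bullet> Mf \<nu> \<theta>))) (at \<theta>)"
    using has_derivative_ln[OF Z0 deriv_Z[OF th]] by (simp add: mult_ac)
  moreover have "(\<lambda>h. inverse (Zf \<nu> \<theta>) * (h \<bullet> Mf \<nu> \<theta>)) = (\<lambda>h. h \<bullet> muf \<nu> \<theta>)"
    by (auto simp: muf_def inner_vec_def sum_distrib_left field_simps)
  ultimately have "((\<lambda>x. ln (Zf \<nu> x)) has_derivative (\<lambda>h. h \<bullet> muf \<nu> \<theta>)) (at \<theta>)" by simp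
  then show ?thesis
    by (rule has_derivative_transform_within_open[OF _ opn th]) (simp add: cumulant_eq)
qed

end

lemma exp_strict: "x \<noteq> 0 \<Longrightarrow> 1 + x < exp (x::real)"
proof -
  assume x: "x \<noteq> 0"
  obtain s where s: "exp x = (\<Sum>m<2. (x ^ m) / fact m) + (exp s / fact 2) * x ^ 2"
    using Maclaurin_exp_le[of x 2] by blast
  have e: "exp x = 1 + x + exp s / 2 * x^2" using s by (simp add: numeral_2_eq_2)
  have "0 < exp s / 2 * x^2" using x by simp
  then show ?thesis using e by linarith
qed

context EF
begin

lemma int_FmC:
  assumes th: "\<theta> \<in> N" and gm: "g \<in> borel_measurable borel" and gb: "\<And>t. \<bar>g t\<bar> \<le> C * (1 + norm t) ^ k"
  shows "integrable \<nu> (\<lambda>t. g t * exp (\<theta> \<bullet> t))"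
proof -
  have pm: "(\<lambda>t::real^'n. (1 + norm t) ^ k) \<in> borel_measurable borel"
    by (intro borel_measurable_continuous_onI continuous_intros)
  have i1: "integrable \<nu> (\<lambda>t. (1 + norm t) ^ k * exp (\<theta> \<bullet> t))"
    by (rule int_Fm[OF th pm, where k=k]) simp
  then have i2: "integrable \<nu> (\<lambda>t. C * ((1 + norm t) ^ k * exp (\<theta> \<bullet> t)))" by simp
  show ?thesis
  proof (rule Bochner_Integration.integrable_bound[OF i2])
    show "(\<lambda>t. g t * exp (\<theta> \<bullet> t)) \<in> borel_measurable \<nu>"
      by (rule meas_borel[OF sets]) (intro borel_measurable_times gm borel_measurable_continuous_onI continuous_intros)
    show "AE t in \<nu>. norm (g t * exp (\<theta> \<bullet> t)) \<le> norm (C * ((1 + norm t) ^ k * exp (\<theta> \<bullet> t)))"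
    proof (rule AE_I2)
      fix t
      have "\<bar>g t\<bar> * exp (\<theta> \<bullet> t) \<le> C * (1 + norm t) ^ k * exp (\<theta> \<bullet> t)"
        using gb[of t] by (intro mult_right_mono) auto
      also have "\<dots> \<le> \<bar>C * ((1 + norm t) ^ k * exp (\<theta> \<bullet> t))\<bar>" by (simp add: mult_ac)
      finally show "norm (g t * exp (\<theta> \<bullet> t)) \<le> norm (C * ((1 + norm t) ^ k * exp (\<theta> \<bullet> t)))"
        by (simp add: abs_mult)
    qed
  qed
qed

lemma int_lin:
  assumes th: "\<theta> \<in> N"
  shows "integrable \<nu> (\<lambda>t. (a \<bullet> t) * exp (\<theta> \<bullet> t))"
    and "(\<integral>t. (a \<bullet> t) * exp (\<theta> \<bullet> t) \<partial>\<nu>) = a \<bullet> Mf \<nu> \<theta>"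
proof -
  have ii: "integrable \<nu> (\<lambda>t. a $ i * (t $ i * exp (\<theta> \<bullet> t)))" for i
    using int_t[OF th, of i] by simp
  have eq: "(\<lambda>t. (a \<bullet> t) * exp (\<theta> \<bullet> t)) = (\<lambda>t. \<Sum>i\<in>UNIV. a $ i * (t $ i * exp (\<theta> \<bullet> t)))"
    by (auto simp: inner_vec_def sum_distrib_right mult_ac)
  show "integrable \<nu> (\<lambda>t. (a \<bullet> t) * exp (\<theta> \<bullet> t))"
    unfolding eq by (rule Bochner_Integration.integrable_sum) (rule ii)
  have "(\<integral>t. (a \<bullet> t) * exp (\<theta> \<bullet> t) \<partial>\<nu>) = (\<Sum>i\<in>UNIV. (\<integral>t. a $ i * (t $ i * exp (\<theta> \<bullet> t)) \<partial>\<nu>))"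
    unfolding eq by (rule Bochner_Integration.integral_sum) (rule ii)
  also have "\<dots> = a \<bullet> Mf \<nu> \<theta>"
    by (simp add: inner_vec_def Mf_def Fm_def)
  finally show "(\<integral>t. (a \<bullet> t) * exp (\<theta> \<bullet> t) \<partial>\<nu>) = a \<bullet> Mf \<nu> \<theta>" .
qed

lemma gibbs:
  assumes t1: "\<theta>1 \<in> N" and t2: "\<theta>2 \<in> N"
  shows "cumulant \<nu> \<theta>2 - cumulant \<nu> \<theta>1 \<ge> (\<theta>2 - \<theta>1) \<bullet> muf \<nu> \<theta>1"
    and "\<theta>1 \<noteq> \<theta>2 \<Longrightarrow> cumulant \<nu> \<theta>2 - cumulant \<nu> \<theta>1 > (\<theta>2 - \<theta>1) \<bullet> muf \<nu> \<theta>1"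
proof -
  define d where "d = \<theta>2 - \<theta>1"
  define c where "c = d \<bullet> muf \<nu> \<theta>1"
  define Z1 where "Z1 = Zf \<nu> \<theta>1"
  define Z2 where "Z2 = Zf \<nu> \<theta>2"
  have Z1: "Z1 > 0" using Z_pos[OF t1] by (simp add: Z1_def)
  have Z2: "Z2 > 0" using Z_pos[OF t2] by (simp add: Z2_def)
  define f where "f t = (exp (d \<bullet> t - c) - 1 - (d \<bullet> t - c)) * exp (\<theta>1 \<bullet> t)" for t
  have f_eq: "f = (\<lambda>t. exp (- c) * exp (\<theta>2 \<bullet> t) - exp (\<theta>1 \<bullet> t) - ((d \<bullet> t) * exp (\<theta>1 \<bullet> t) - c * exp (\<theta>1 \<bullet> t)))"
    by (auto simp: f_def d_def algebra_simps exp_add[symmetric] inner_diff_left)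
  have i1: "integrable \<nu> (\<lambda>t. exp (\<theta>1 \<bullet> t))" by (rule int_exp[OF t1])
  have i2: "integrable \<nu> (\<lambda>t. exp (\<theta>2 \<bullet> t))" by (rule int_exp[OF t2])
  have i3: "integrable \<nu> (\<lambda>t. (d \<bullet> t) * exp (\<theta>1 \<bullet> t))" by (rule int_lin(1)[OF t1])
  have fint: "integrable \<nu> f" unfolding f_eq using i1 i2 i3 by auto
  have dM: "d \<bullet> Mf \<nu> \<theta>1 = c * Z1"
    using Z1 by (simp add: c_def muf_def Z1_def inner_vec_def sum_distrib_right)
  have "integral\<^sup>L \<nu> f = exp (- c) * Z2 - Z1 - (d \<bullet> Mf \<nu> \<theta>1 - c * Z1)"
    unfolding f_eq using i1 i2 i3 int_lin(2)[OF t1, of d]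
    by (simp add: Z1_def Z2_def Zf_def Fm_def)
  then have intf: "integral\<^sup>L \<nu> f = exp (- c) * Z2 - Z1" using dM by simp
  have fnn: "\<And>t. 0 \<le> f t"
  proof -
    fix t
    have "1 + (d \<bullet> t - c) \<le> exp (d \<bullet> t - c)" by (rule exp_ge_add_one_self)
    then have "0 \<le> exp (d \<bullet> t - c) - 1 - (d \<bullet> t - c)" by linarith
    then show "0 \<le> f t" unfolding f_def by (intro mult_nonneg_nonneg) auto
  qed
  have key: "cumulant \<nu> \<theta>2 - cumulant \<nu> \<theta>1 - c = ln (exp (- c) * Z2 / Z1)"
    using Z1 Z2 by (simp add: cumulant_eq[OF t1] cumulant_eq[OF t2] Z1_def Z2_def ln_div ln_mult)
  have "0 \<le> integral\<^sup>L \<nu> f" using fnn by (intro integral_nonneg_AE) auto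
  then have "Z1 \<le> exp (- c) * Z2" using intf by simp
  then have "1 \<le> exp (- c) * Z2 / Z1" using Z1 by simp
  then have "0 \<le> ln (exp (- c) * Z2 / Z1)" by simp
  then show "cumulant \<nu> \<theta>2 - cumulant \<nu> \<theta>1 \<ge> (\<theta>2 - \<theta>1) \<bullet> muf \<nu> \<theta>1"
    using key by (simp add: c_def d_def)
  assume ne: "\<theta>1 \<noteq> \<theta>2"
  have "integral\<^sup>L \<nu> f \<noteq> 0"
  proof
    assume "integral\<^sup>L \<nu> f = 0"
    then have "AE t in \<nu>. f t = 0"
      using integral_nonneg_eq_0_iff_AE[OF fint] fnn by auto
    then have "AE t in \<nu>. d \<bullet> t = c"
    proof (rule eventually_mono)
      fix t assume "f t = 0"
      then have "exp (d \<bullet> t - c) = 1 + (d \<bullet> t - c)" by (simp add: f_def)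
      then show "d \<bullet> t = c" using exp_strict[of "d \<bullet> t - c"] by fastforce
    qed
    then have "d = 0" using minimal unfolding minimal_ef_def by blast
    then show False using ne by (simp add: d_def)
  qed
  then have "0 < integral\<^sup>L \<nu> f" using \<open>0 \<le> integral\<^sup>L \<nu> f\<close> by simp
  then have "Z1 < exp (- c) * Z2" using intf by simp
  then have "1 < exp (- c) * Z2 / Z1" using Z1 by simp
  then have "0 < ln (exp (- c) * Z2 / Z1)" by simp
  then show "cumulant \<nu> \<theta>2 - cumulant \<nu> \<theta>1 > (\<theta>2 - \<theta>1) \<bullet> muf \<nu> \<theta>1"
    using key by (simp add: c_def d_def)
qed

lemma mono_strict:
  assumes "\<theta>1 \<in> N" "\<theta>2 \<in> N" "\<theta>1 \<noteq> \<theta>2"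
  shows "(\<theta>2 - \<theta>1) \<bullet> (muf \<nu> \<theta>2 - muf \<nu> \<theta>1) > 0"
proof -
  have a: "cumulant \<nu> \<theta>2 - cumulant \<nu> \<theta>1 > (\<theta>2 - \<theta>1) \<bullet> muf \<nu> \<theta>1"
    using gibbs(2)[OF assms(1,2) assms(3)] .
  have b: "cumulant \<nu> \<theta>1 - cumulant \<nu> \<theta>2 > (\<theta>1 - \<theta>2) \<bullet> muf \<nu> \<theta>2"
    using gibbs(2)[OF assms(2,1)] assms(3) by auto
  have "(\<theta>1 - \<theta>2) \<bullet> muf \<nu> \<theta>2 = - ((\<theta>2 - \<theta>1) \<bullet> muf \<nu> \<theta>2)"
    by (simp add: inner_diff_left)
  then show ?thesis using a b by (simp add: inner_diff_right)
qed

lemma mean_inj: "inj_on (mean_param \<nu>) N"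
proof (rule inj_onI)
  fix x y assume x: "x \<in> N" and y: "y \<in> N" and eq: "mean_param \<nu> x = mean_param \<nu> y"
  show "x = y"
  proof (rule ccontr)
    assume "x \<noteq> y"
    then have "(y - x) \<bullet> (muf \<nu> y - muf \<nu> x) > 0" using mono_strict[OF x y] by simp
    then show False using eq by (simp add: mean_eq[OF x] mean_eq[OF y])
  qed
qed

lemma canon_of_mean_eq:
  assumes "\<theta> \<in> N" shows "canon_of_mean \<nu> (mean_param \<nu> \<theta>) = \<theta>"
  unfolding canon_of_mean_def
  by (rule the_equality) (use assms mean_inj in \<open>auto dest: inj_onD\<close>)

lemma fenchel_eq:
  assumes th: "\<theta> \<in> N"
  shows "fenchel_conj \<nu> (mean_param \<nu> \<theta>) = \<theta> \<bullet> mean_param \<nu> \<theta> - cumulant \<nu> \<theta>"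
  unfolding fenchel_conj_def
proof (rule cSup_eq_maximum)
  show "\<theta> \<bullet> mean_param \<nu> \<theta> - cumulant \<nu> \<theta> \<in> (\<lambda>x. x \<bullet> mean_param \<nu> \<theta> - cumulant \<nu> x) ` N"
    using th by auto
  fix y assume "y \<in> (\<lambda>x. x \<bullet> mean_param \<nu> \<theta> - cumulant \<nu> x) ` N"
  then obtain x where x: "x \<in> N" and y: "y = x \<bullet> mean_param \<nu> \<theta> - cumulant \<nu> x" by auto
  have "cumulant \<nu> x - cumulant \<nu> \<theta> \<ge> (x - \<theta>) \<bullet> muf \<nu> \<theta>" by (rule gibbs(1)[OF th x])
  then show "y \<le> \<theta> \<bullet> mean_param \<nu> \<theta> - cumulant \<nu> \<theta>"
    using y by (simp add: mean_eq[OF th] inner_diff_left)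
qed

lemma int_dens:
  assumes th: "\<theta> \<in> N" and gm: "g \<in> borel_measurable borel" and gb: "\<And>t. \<bar>g t\<bar> \<le> C * (1 + norm t) ^ k"
  shows "integrable \<nu> (\<lambda>t. g t * ef_density \<nu> \<theta> t)"
proof -
  have "integrable \<nu> (\<lambda>t. g t * exp (\<theta> \<bullet> t) / Zf \<nu> \<theta>)"
    using int_FmC[OF th gm gb] by simp
  then show ?thesis by (simp add: density_eq[OF th])
qed

lemma quad_form:
  assumes th: "\<theta> \<in> N"
  shows "x \<bullet> (var_matrix \<nu> \<theta> *v x) = (\<integral>t. (x \<bullet> (t - mean_param \<nu> \<theta>))\<^sup>2 * ef_density \<nu> \<theta> t \<partial>\<nu>)"
proof -
  define m where "m = mean_param \<nu> \<theta>"
  define p where "p = ef_density \<nu> \<theta>"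
  have gm: "(\<lambda>t::real^'n. (t $ i - m $ i) * (t $ j - m $ j)) \<in> borel_measurable borel" for i j
    by (intro borel_measurable_continuous_onI continuous_intros)
  have gb: "\<bar>(t $ i - m $ i) * (t $ j - m $ j)\<bar> \<le> ((1 + \<bar>m $ i\<bar>) * (1 + \<bar>m $ j\<bar>)) * (1 + norm t) ^ 2" for t :: "real^'n" and i j
  proof -
    have a: "\<bar>t $ k - m $ k\<bar> \<le> (1 + \<bar>m $ k\<bar>) * (1 + norm t)" for k
    proof -
      have "\<bar>t $ k - m $ k\<bar> \<le> \<bar>t $ k\<bar> + \<bar>m $ k\<bar>" by linarith
      also have "\<dots> \<le> norm t + \<bar>m $ k\<bar>" using component_le_norm_cart[of t k] by simp
      also have "\<dots> \<le> (1 + \<bar>m $ k\<bar>) * (1 + norm t)" by (simp add: algebra_simps)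
      finally show ?thesis .
    qed
    have "\<bar>t $ i - m $ i\<bar> * \<bar>t $ j - m $ j\<bar> \<le> ((1 + \<bar>m $ i\<bar>) * (1 + norm t)) * ((1 + \<bar>m $ j\<bar>) * (1 + norm t))"
      using a[of i] a[of j] by (intro mult_mono) auto
    then show ?thesis by (simp add: abs_mult power2_eq_square mult_ac)
  qed
  have ii: "integrable \<nu> (\<lambda>t. x $ i * x $ j * ((t $ i - m $ i) * (t $ j - m $ j) * p t))" for i j
    using int_dens[OF th gm gb] by (simp add: p_def)
  have "x \<bullet> (var_matrix \<nu> \<theta> *v x) = (\<Sum>i\<in>UNIV. \<Sum>j\<in>UNIV. x $ i * x $ j * (\<integral>t. (t $ i - m $ i) * (t $ j - m $ j) * p t \<partial>\<nu>))"
    by (simp add: inner_vec_def matrix_vector_mult_def var_matrix_def m_def p_def sum_distrib_left mult_ac)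
  also have "\<dots> = (\<Sum>i\<in>UNIV. \<Sum>j\<in>UNIV. (\<integral>t. x $ i * x $ j * ((t $ i - m $ i) * (t $ j - m $ j) * p t) \<partial>\<nu>))"
    by simp
  also have "\<dots> = (\<Sum>i\<in>UNIV. (\<integral>t. (\<Sum>j\<in>UNIV. x $ i * x $ j * ((t $ i - m $ i) * (t $ j - m $ j) * p t)) \<partial>\<nu>))"
    by (intro sum.cong refl Bochner_Integration.integral_sum[symmetric] ii)
  also have "\<dots> = (\<integral>t. (\<Sum>i\<in>UNIV. \<Sum>j\<in>UNIV. x $ i * x $ j * ((t $ i - m $ i) * (t $ j - m $ j) * p t)) \<partial>\<nu>)"
    by (intro Bochner_Integration.integral_sum[symmetric] Bochner_Integration.integrable_sum ii)
  also have "\<dots> = (\<integral>t. (x \<bullet> (t - m))\<^sup>2 * p t \<partial>\<nu>)"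
  proof (intro Bochner_Integration.integral_cong refl)
    fix t
    have "(x \<bullet> (t - m))\<^sup>2 = (\<Sum>i\<in>UNIV. x $ i * (t $ i - m $ i)) * (\<Sum>j\<in>UNIV. x $ j * (t $ j - m $ j))"
      by (simp add: power2_eq_square inner_vec_def)
    also have "\<dots> = (\<Sum>i\<in>UNIV. \<Sum>j\<in>UNIV. x $ i * (t $ i - m $ i) * (x $ j * (t $ j - m $ j)))"
      by (rule sum_product)
    finally show "(\<Sum>i\<in>UNIV. \<Sum>j\<in>UNIV. x $ i * x $ j * ((t $ i - m $ i) * (t $ j - m $ j) * p t)) = (x \<bullet> (t - m))\<^sup>2 * p t"
      by (simp add: sum_distrib_right sum_distrib_left mult_ac)
  qed
  finally show ?thesis by (simp add: m_def p_def)
qed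

lemma pos_def:
  assumes th: "\<theta> \<in> N" and x: "x \<noteq> 0"
  shows "x \<bullet> (Vf \<nu> \<theta> *v x) > 0"
proof -
  define m where "m = mean_param \<nu> \<theta>"
  define F where "F = (\<lambda>t. (x \<bullet> (t - m))\<^sup>2 * ef_density \<nu> \<theta> t)"
  have qf: "x \<bullet> (Vf \<nu> \<theta> *v x) = integral\<^sup>L \<nu> F"
    using quad_form[OF th, of x] by (simp add: var_eq[OF th] F_def m_def)
  have Z0: "Zf \<nu> \<theta> > 0" using Z_pos[OF th] .
  have Fnn: "0 \<le> F t" for t using Z0 by (simp add: F_def density_eq[OF th])
  have gm: "(\<lambda>t::real^'n. (x \<bullet> (t - m))\<^sup>2) \<in> borel_measurable borel"
    by (intro borel_measurable_continuous_onI continuous_intros)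
  have gb: "\<bar>(x \<bullet> (t - m))\<^sup>2\<bar> \<le> (norm x * (1 + norm m))\<^sup>2 * (1 + norm t) ^ 2" for t
  proof -
    have "\<bar>x \<bullet> (t - m)\<bar> \<le> norm x * norm (t - m)" by (rule Cauchy_Schwarz_ineq2)
    also have "\<dots> \<le> norm x * ((1 + norm m) * (1 + norm t))"
    proof (intro mult_left_mono)
      have "norm (t - m) \<le> norm t + norm m" by (rule norm_triangle_ineq4)
      also have "\<dots> \<le> (1 + norm m) * (1 + norm t)" by (simp add: algebra_simps)
      finally show "norm (t - m) \<le> (1 + norm m) * (1 + norm t)" .
    qed auto
    finally have "\<bar>x \<bullet> (t - m)\<bar> \<le> norm x * (1 + norm m) * (1 + norm t)" by (simp add: mult_ac)
    then have "\<bar>x \<bullet> (t - m)\<bar>\<^sup>2 \<le> (norm x * (1 + norm m) * (1 + norm t))\<^sup>2"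
      by (intro power_mono) auto
    then show ?thesis by (simp add: power_mult_distrib)
  qed
  have Fint: "integrable \<nu> F" unfolding F_def by (rule int_dens[OF th gm gb])
  have "integral\<^sup>L \<nu> F \<noteq> 0"
  proof
    assume "integral\<^sup>L \<nu> F = 0"
    then have "AE t in \<nu>. F t = 0"
      using integral_nonneg_eq_0_iff_AE[OF Fint] Fnn by auto
    then have "AE t in \<nu>. x \<bullet> t = x \<bullet> m"
      by (rule eventually_mono) (use Z0 in \<open>auto simp: F_def density_eq[OF th] inner_diff_right\<close>)
    then have "x = 0" using minimal unfolding minimal_ef_def by blast
    then show False using x by simp
  qed
  moreover have "0 \<le> integral\<^sup>L \<nu> F" using Fnn by (intro integral_nonneg_AE) auto
  ultimately show ?thesis using qf by simp
qed

end

lemma sum_UNIV_Plus: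
  fixes f :: "('p::finite + 'q::finite) \<Rightarrow> 'a::comm_monoid_add"
  shows "(\<Sum>k\<in>UNIV. f k) = (\<Sum>i\<in>UNIV. f (Inl i)) + (\<Sum>j\<in>UNIV. f (Inr j))"
proof -
  have "(\<Sum>k\<in>UNIV. f k) = (\<Sum>k\<in>UNIV <+> UNIV. f k)" by simp
  also have "\<dots> = (\<Sum>i\<in>UNIV. f (Inl i)) + (\<Sum>j\<in>UNIV. f (Inr j))"
    by (subst sum.Plus) (auto simp: comp_def)
  finally show ?thesis .
qed

lemma axis_Inr_Inl[simp]: "axis (Inr j) (c::real) $ Inl i = 0"
  by (simp add: axis_def)
lemma axis_Inr_Inr[simp]: "axis (Inr j) (c::real) $ Inr j' = (if j' = j then c else 0)"
  by (simp add: axis_def)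
lemma mv_neg: "(A::real^'n^'m) *v (- x) = - (A *v x)"
  by (simp add: matrix_vector_mult_def vec_eq_iff sum_negf)
lemma mv_diff_left: "((A::real^'n^'m) - B) *v x = A *v x - B *v x"
  by (simp add: matrix_vector_mult_def vec_eq_iff sum_subtractf algebra_simps)

definition pu :: "real^('p::finite+'q::finite) \<Rightarrow> real^'p" where "pu x = (\<chi> i. x $ Inl i)"
definition pv :: "real^('p::finite+'q::finite) \<Rightarrow> real^'q" where "pv x = (\<chi> j. x $ Inr j)"
definition uv_block :: "real^('p::finite+'q::finite)^('p+'q) \<Rightarrow> real^'q^'p" where
  "uv_block M = (\<chi> i j. M $ Inl i $ Inr j)"
definition vu_block :: "real^('p::finite+'q::finite)^('p+'q) \<Rightarrow> real^'p^'q" where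
  "vu_block M = (\<chi> i j. M $ Inr i $ Inl j)"
definition Lm :: "real^('p::finite+'q::finite)^('p+'q) \<Rightarrow> real^('p+'q)^('p+'q)" where
  "Lm V = (\<chi> k. case k of Inl i \<Rightarrow> V $ Inl i | Inr j \<Rightarrow> axis (Inr j) 1)"
definition emb :: "real^'p::finite \<Rightarrow> real^'q::finite \<Rightarrow> real^('p+'q)" where
  "emb a b = (\<chi> k. case k of Inl i \<Rightarrow> a $ i | Inr j \<Rightarrow> b $ j)"

lemma pu_emb[simp]: "pu (emb a b) = a" and pv_emb[simp]: "pv (emb a b) = b"
  by (simp_all add: pu_def pv_def emb_def vec_eq_iff)

lemma vec_eq_pu_pv: "x = y \<longleftrightarrow> pu x = pu y \<and> pv x = pv y"
proof
  assume "pu x = pu y \<and> pv x = pv y"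
  then have "\<forall>i. x $ Inl i = y $ Inl i" "\<forall>j. x $ Inr j = y $ Inr j"
    by (auto simp: pu_def pv_def vec_eq_iff)
  then show "x = y" unfolding vec_eq_iff by (metis sum.exhaust)
qed simp

lemma emb_pu_pv: "emb (pu x) (pv x) = x"
  by (simp add: vec_eq_pu_pv)

lemma inner_split: "x \<bullet> y = pu x \<bullet> pu y + pv x \<bullet> pv y"
  by (simp add: inner_vec_def sum_UNIV_Plus pu_def pv_def)

lemma pu_mult: "pu (A *v x) = uu_block A *v pu x + uv_block A *v pv x"
  and pv_mult: "pv (A *v x) = vu_block A *v pu x + vv_block A *v pv x"
  by (simp_all add: vec_eq_iff pu_def pv_def uu_block_def uv_block_def vu_block_def vv_block_def
      matrix_vector_mult_def sum_UNIV_Plus)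

lemma pu_Lm: "pu (Lm V *v x) = pu (V *v x)" and pv_Lm: "pv (Lm V *v x) = pv x"
proof -
  show "pu (Lm V *v x) = pu (V *v x)"
    by (simp add: vec_eq_iff pu_def Lm_def matrix_vector_mult_def)
  have "(\<Sum>k\<in>UNIV. axis (Inr j) 1 $ k * x $ k) = x $ Inr j" for j :: 'b
  proof -
    have "(\<Sum>k\<in>UNIV. axis (Inr j) (1::real) $ k * x $ k) = (\<Sum>k\<in>UNIV. if k = Inr j then x $ k else 0)"
      by (intro sum.cong) (auto simp: axis_def)
    then show ?thesis by simp
  qed
  then show "pv (Lm V *v x) = pv x"
    by (simp add: vec_eq_iff pv_def Lm_def matrix_vector_mult_def)
qed

lemma pu_bd: "pu (block_diag P Q *v y) = P *v pu y" and pv_bd: "pv (block_diag P Q *v y) = Q *v pv y"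
  by (simp_all add: vec_eq_iff pu_def pv_def block_diag_def matrix_vector_mult_def sum_UNIV_Plus)

lemma pu_LT: "pu (transpose (Lm V) *v z) = transpose (uu_block V) *v pu z"
  and pv_LT: "pv (transpose (Lm V) *v z) = transpose (uv_block V) *v pu z + pv z"
proof -
  show "pu (transpose (Lm V) *v z) = transpose (uu_block V) *v pu z"
    by (simp only: vec_eq_iff pu_def) (simp add: transpose_def Lm_def matrix_vector_mult_def sum_UNIV_Plus uu_block_def)
  have "(\<Sum>j'\<in>UNIV. axis (Inr j') (1::real) $ Inr j * z $ Inr j') = z $ Inr j" for j :: 'b
  proof -
    have "(\<Sum>j'\<in>UNIV. axis (Inr j') (1::real) $ Inr j * z $ Inr j') = (\<Sum>j'\<in>UNIV. if j = j' then z $ Inr j' else 0)"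
      by (intro sum.cong) auto
    then show ?thesis by simp
  qed
  then show "pv (transpose (Lm V) *v z) = transpose (uv_block V) *v pu z + pv z"
    by (simp only: vec_eq_iff pv_def pu_def) (simp add: transpose_def Lm_def matrix_vector_mult_def sum_UNIV_Plus uv_block_def)
qed

lemma inj_invertible:
  fixes A :: "real^'n^'n"
  assumes "\<And>x. A *v x = 0 \<Longrightarrow> x = 0"
  shows "invertible A"
proof -
  have "inj ((*v) A)"
  proof (rule injI)
    fix x y assume "A *v x = A *v y"
    then have "A *v (x - y) = 0" by (simp add: matrix_vector_mult_diff_distrib)
    then show "x = y" using assms[of "x - y"] by simp
  qed
  then show ?thesis
    unfolding invertible_left_inverse matrix_left_invertible_injective[symmetric] .
qed

lemma inv_props:
  fixes A :: "real^'n^'n"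
  assumes "invertible A"
  shows "A ** matrix_inv A = mat 1" "matrix_inv A ** A = mat 1"
proof -
  have "\<exists>A'. A ** A' = mat 1 \<and> A' ** A = mat 1" using assms unfolding invertible_def by blast
  then have "A ** matrix_inv A = mat 1 \<and> matrix_inv A ** A = mat 1"
    unfolding matrix_inv_def by (rule someI_ex)
  then show "A ** matrix_inv A = mat 1" "matrix_inv A ** A = mat 1" by auto
qed

lemma inv_unique:
  fixes A B :: "real^'n^'n"
  assumes "A ** B = mat 1"
  shows "matrix_inv A = B"
proof -
  have BA: "B ** A = mat 1" using assms matrix_left_right_inverse by blast
  then have inv: "invertible A" unfolding invertible_def using assms by blast
  have "matrix_inv A = matrix_inv A ** (A ** B)" by (simp add: assms)
  also have "\<dots> = (matrix_inv A ** A) ** B" by (simp add: matrix_mul_assoc)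
  also have "\<dots> = B" by (simp add: inv_props(2)[OF inv])
  finally show ?thesis .
qed

lemma inv_mult_cancel:
  fixes A :: "real^'n^'n"
  assumes "invertible A"
  shows "A *v (matrix_inv A *v x) = x" "matrix_inv A *v (A *v x) = x"
  by (simp_all add: matrix_vector_mul_assoc inv_props[OF assms])

locale blockV =
  fixes V :: "real^('p::finite+'q::finite)^('p+'q)"
  assumes sym: "transpose V = V"
    and pd: "\<And>x. x \<noteq> 0 \<Longrightarrow> x \<bullet> (V *v x) > 0"
begin

lemma V_inj: "V *v x = 0 \<Longrightarrow> x = 0"
  using pd[of x] by auto

lemma V_inv: "invertible V" by (rule inj_invertible) (rule V_inj)

lemma uu_inv: "invertible (uu_block V)"
proof (rule inj_invertible)
  fix a assume a: "uu_block V *v a = 0"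
  define x where "x = emb a (0::real^'q)"
  have "x \<bullet> (V *v x) = 0"
    by (simp add: inner_split x_def pu_mult a)
  then have "x = 0" using pd[of x] by (cases "x = 0") auto
  then show "a = 0" using pu_emb[of a "0::real^'q"] by (simp add: x_def pu_def vec_eq_iff)
qed

lemma L_inv: "invertible (Lm V)"
proof (rule inj_invertible)
  fix x assume x: "Lm V *v x = 0"
  have "pu (V *v x) = 0" using arg_cong[OF x, of pu] unfolding pu_Lm by (simp add: pu_def vec_eq_iff)
  moreover have "pv x = 0" using arg_cong[OF x, of pv] unfolding pv_Lm by (simp add: pv_def vec_eq_iff)
  ultimately have "x \<bullet> (V *v x) = 0" by (simp add: inner_split[of x])
  then show "x = 0" using pd[of x] by (cases "x = 0") auto
qed

lemma transpose_uu: "transpose (uu_block V) = uu_block V"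
  using sym by (simp add: vec_eq_iff transpose_def uu_block_def)

lemma transpose_uv: "transpose (uv_block V) = vu_block V"
  using sym by (simp add: vec_eq_iff transpose_def uv_block_def vu_block_def)

definition "P = matrix_inv (uu_block V)"
definition "Sc = vv_block V - vu_block V ** P ** uv_block V"

lemma P_props: "uu_block V *v (P *v y) = y" "P *v (uu_block V *v y) = y"
  unfolding P_def using inv_mult_cancel[OF uu_inv] by auto

lemma Sc_inv: "matrix_inv (vv_block (matrix_inv V)) = Sc"
proof -
  define X where "X = matrix_inv V"
  have "Sc ** vv_block X = mat 1"
  proof (subst matrix_eq, intro allI)
    fix y :: "real^'q"
    define x where "x = X *v emb 0 y"
    have Vx: "V *v x = emb 0 y" unfolding x_def X_def by (rule inv_mult_cancel(1)[OF V_inv])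
    have xv: "pv x = vv_block X *v y"
      by (simp add: x_def pv_mult)
    have e1: "uu_block V *v pu x + uv_block V *v pv x = 0"
      using arg_cong[OF Vx, of pu] by (simp add: pu_mult)
    have e2: "vu_block V *v pu x + vv_block V *v pv x = y"
      using arg_cong[OF Vx, of pv] by (simp add: pv_mult)
    have "pu x = - (P *v (uv_block V *v pv x))"
    proof -
      have "uu_block V *v pu x = - (uv_block V *v pv x)" using e1 by (simp add: add_eq_0_iff)
      then have "P *v (uu_block V *v pu x) = P *v (- (uv_block V *v pv x))" by simp
      then show ?thesis by (simp add: P_props mv_neg)
    qed
    then have "Sc *v pv x = y"
      using e2 by (simp add: Sc_def mv_diff_left matrix_vector_mul_assoc[symmetric]
          mv_neg algebra_simps)
    then show "(Sc ** vv_block X) *v y = mat 1 *v y"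
      by (simp add: xv matrix_vector_mul_assoc[symmetric])
  qed
  then have "vv_block X ** Sc = mat 1" using matrix_left_right_inverse by blast
  then show ?thesis unfolding X_def by (rule inv_unique)
qed

lemma LDL: "transpose (Lm V) ** block_diag P Sc ** Lm V = V"
proof (subst matrix_eq, intro allI)
  fix k :: "real^('p+'q)"
  define y where "y = Lm V *v k"
  have yu: "pu y = uu_block V *v pu k + uv_block V *v pv k" unfolding y_def pu_Lm by (simp only: pu_mult)
  have yv: "pv y = pv k" by (simp add: y_def pv_Lm)
  have Py: "P *v pu y = pu k + P *v (uv_block V *v pv k)"
    by (simp add: yu matrix_vector_right_distrib P_props)
  have "(transpose (Lm V) ** block_diag P Sc ** Lm V) *v k = transpose (Lm V) *v (block_diag P Sc *v y)"
    by (simp add: y_def matrix_vector_mul_assoc matrix_mul_assoc)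
  also have "\<dots> = V *v k"
  proof (subst vec_eq_pu_pv, intro conjI)
    have "pu (transpose (Lm V) *v (block_diag P Sc *v y)) = uu_block V *v (P *v pu y)"
      unfolding pu_LT pu_bd transpose_uu ..
    also have "\<dots> = pu y" by (rule P_props(1))
    also have "\<dots> = pu (V *v k)" unfolding y_def pu_Lm ..
    finally show "pu (transpose (Lm V) *v (block_diag P Sc *v y)) = pu (V *v k)" .
    have "pv (transpose (Lm V) *v (block_diag P Sc *v y)) = vu_block V *v (P *v pu y) + Sc *v pv k"
      unfolding pv_LT pu_bd pv_bd transpose_uv yv ..
    also have "\<dots> = vu_block V *v pu k + vv_block V *v pv k"
      by (simp add: Py Sc_def matrix_vector_right_distrib mv_diff_left matrix_vector_mul_assoc matrix_mul_assoc)
    also have "\<dots> = pv (V *v k)" by (simp add: pv_mult)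
    finally show "pv (transpose (Lm V) *v (block_diag P Sc *v y)) = pv (V *v k)" .
  qed
  finally show "(transpose (Lm V) ** block_diag P Sc ** Lm V) *v k = V *v k" .
qed

lemma main_identity:
  "transpose (matrix_inv (Lm V)) ** V ** matrix_inv (Lm V)
     = block_diag (matrix_inv (uu_block V)) (matrix_inv (vv_block (matrix_inv V)))"
proof -
  define J where "J = matrix_inv (Lm V)"
  define D where "D = block_diag P Sc"
  have LJ: "Lm V ** J = mat 1" unfolding J_def by (rule inv_props(1)[OF L_inv])
  have "transpose J ** V ** J = transpose J ** (transpose (Lm V) ** D ** Lm V) ** J"
    by (simp add: LDL D_def)
  also have "\<dots> = transpose (Lm V ** J) ** D ** (Lm V ** J)"
    by (simp add: matrix_transpose_mul matrix_mul_assoc)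
  also have "\<dots> = D" by (simp add: LJ)
  finally show ?thesis by (simp add: J_def D_def P_def Sc_inv)
qed

end

definition msum :: "real^'n^'m \<Rightarrow> real" where
  "msum A = (\<Sum>i\<in>UNIV. \<Sum>j\<in>UNIV. \<bar>A $ i $ j\<bar>)"

lemma norm_mv: "norm ((A::real^'n^'m) *v x) \<le> msum A * norm x"
proof -
  have "norm (A *v x) \<le> onorm ((*v) A) * norm x" by (rule onorm) simp
  also have "\<dots> \<le> msum A * norm x"
    unfolding msum_def by (intro mult_right_mono onorm_le_matrix_component_sum) auto
  finally show ?thesis .
qed

lemma msum_zero[simp]: "msum 0 = 0" by (simp add: msum_def)

lemma msum_nonneg: "0 \<le> msum A" by (simp add: msum_def sum_nonneg)

lemma tendsto_msum: "(F \<longlongrightarrow> A) net \<Longrightarrow> ((\<lambda>y. msum (F y)) \<longlongrightarrow> msum A) net"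
  unfolding msum_def by (intro tendsto_intros)

lemma tendsto_det:
  fixes F :: "'a \<Rightarrow> real^'n^'n"
  shows "(F \<longlongrightarrow> A) net \<Longrightarrow> ((\<lambda>y. det (F y)) \<longlongrightarrow> det A) net"
  unfolding det_def by (intro tendsto_intros)

lemma matrix_inv_formula:
  fixes B :: "real^'n^'n"
  assumes d: "det B \<noteq> 0"
  shows "matrix_inv B = (\<chi> k l. det (\<chi> i j. if j = k then axis l 1 $ i else B $ i $ j) / det B)"
proof -
  from d obtain C where C: "B ** C = mat 1" "C ** B = mat 1"
    unfolding invertible_det_nz[symmetric] invertible_def by blast
  have inv: "invertible B" using C unfolding invertible_def by blast
  have BB: "B ** matrix_inv B = mat 1"
  proof -
    have "\<exists>A'. B ** A' = mat 1 \<and> A' ** B = mat 1" using C by blast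
    then have "B ** matrix_inv B = mat 1 \<and> matrix_inv B ** B = mat 1"
      unfolding matrix_inv_def by (rule someI_ex)
    then show ?thesis by simp
  qed
  have col: "(M *v axis l 1) $ k = M $ k $ l" for M :: "real^'n^'n" and k l
  proof -
    have "(M *v axis l 1) $ k = (\<Sum>j\<in>UNIV. if j = l then M $ k $ j else 0)"
      by (simp add: matrix_vector_mult_def axis_def if_distrib cong: if_cong)
    then show ?thesis by simp
  qed
  have "B *v (matrix_inv B *v axis l 1) = axis l 1" for l
    by (simp add: matrix_vector_mul_assoc BB)
  then have "matrix_inv B *v axis l 1 = (\<chi> k. det (\<chi> i j. if j = k then axis l 1 $ i else B $ i $ j) / det B)" for l
    using cramer[OF d] by blast
  then show ?thesis
    by (simp add: vec_eq_iff) (metis col vec_lambda_beta)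
qed

lemma tendsto_matrix_inv:
  fixes F :: "'a \<Rightarrow> real^'n^'n"
  assumes F: "(F \<longlongrightarrow> A) net" and inv: "invertible A"
  shows "((\<lambda>y. matrix_inv (F y)) \<longlongrightarrow> matrix_inv A) net"
proof -
  have dA: "det A \<noteq> 0" using inv invertible_det_nz by blast
  define G where "G B = (\<chi> k l. det (\<chi> i j. if j = k then axis l 1 $ i else B $ i $ j) / det B)" for B :: "real^'n^'n"
  have ifl: "((\<lambda>y. if j = k then c else F y $ i $ j) \<longlongrightarrow> (if j = k then c else A $ i $ j)) net" for i j k c
    using tendsto_vec_nth[OF tendsto_vec_nth[OF F, of i], of j] by (cases "j = k") auto
  have "((\<lambda>y. G (F y)) \<longlongrightarrow> G A) net"
    unfolding G_def
    by (intro tendsto_vec_lambda tendsto_divide tendsto_det ifl F dA)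
  moreover have "eventually (\<lambda>y. G (F y) = matrix_inv (F y)) net"
  proof -
    have "eventually (\<lambda>y. det (F y) \<noteq> 0) net"
      using tendsto_imp_eventually_ne[OF tendsto_det[OF F] dA] .
    then show ?thesis by (rule eventually_mono) (simp add: G_def matrix_inv_formula)
  qed
  ultimately have "((\<lambda>y. matrix_inv (F y)) \<longlongrightarrow> G A) net"
    by (rule Lim_transform_eventually)
  then show ?thesis by (simp add: G_def matrix_inv_formula[OF dA])
qed

lemma prod_deriv:
  fixes F :: "real^'m \<Rightarrow> real^'k^'l" and w :: "real^'m \<Rightarrow> real^'k"
  assumes cF: "isCont F x" and dw: "(w has_derivative w') (at x)" and w0: "w x = 0"
  shows "((\<lambda>y. F y *v w y) has_derivative (\<lambda>h. F x *v w' h)) (at x)"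
  unfolding has_derivative_at
proof (intro conjI)
  have blw: "bounded_linear w'" using dw by (rule has_derivative_bounded_linear)
  have "bounded_linear ((*v) (F x))" by simp
  from bounded_linear_compose[OF this blw]
  show "bounded_linear (\<lambda>h. F x *v w' h)" .
  obtain K where K: "K > 0" "\<And>h. norm (w' h) \<le> norm h * K"
    using bounded_linear.pos_bounded[OF blw] by blast
  define r where "r h = norm (w (x + h) - w x - w' h) / norm h" for h
  have r0: "(r \<longlongrightarrow> 0) (at 0)" using dw unfolding has_derivative_at r_def by blast
  have Fh: "((\<lambda>h. F (x + h)) \<longlongrightarrow> F x) (at 0)" using cF by (simp add: isCont_iff)
  define g where "g h = msum (F (x + h)) * r h + msum (F (x + h) - F x) * K" for h
  have g0: "(g \<longlongrightarrow> 0) (at 0)"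
  proof -
    have "(g \<longlongrightarrow> msum (F x) * 0 + msum (F x - F x) * K) (at 0)"
      unfolding g_def by (intro tendsto_intros tendsto_msum Fh r0)
    moreover have "msum (F x - F x) = 0" by (simp add: msum_def)
    ultimately show ?thesis by simp
  qed
  have ev: "\<forall>\<^sub>F h in at 0. norm (norm (F (x + h) *v w (x + h) - F x *v w x - F x *v w' h) / norm h) \<le> g h"
  proof (rule eventually_mono[OF eventually_at_in_open'[of UNIV]], simp_all)
    fix h :: "real^'m"
    have eq: "F (x + h) *v w (x + h) - F x *v w x - F x *v w' h
        = F (x + h) *v (w (x + h) - w x - w' h) + (F (x + h) - F x) *v w' h"
      using w0 by (simp add: matrix_vector_mult_diff_distrib algebra_simps matrix_vector_mult_def vec_eq_iff sum_subtractf sum.distrib)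
    have "norm (F (x + h) *v w (x + h) - F x *v w x - F x *v w' h)
        \<le> msum (F (x + h)) * norm (w (x + h) - w x - w' h) + msum (F (x + h) - F x) * (norm h * K)"
      unfolding eq
      by (rule order_trans[OF norm_triangle_ineq add_mono[OF norm_mv order_trans[OF norm_mv mult_left_mono[OF K(2) msum_nonneg]]]])
    then have "norm (F (x + h) *v w (x + h) - F x *v w x - F x *v w' h) / norm h
        \<le> (msum (F (x + h)) * norm (w (x + h) - w x - w' h) + msum (F (x + h) - F x) * (norm h * K)) / norm h"
      by (rule divide_right_mono) simp
    also have "\<dots> \<le> g h"
      by (cases "h = 0") (auto simp: g_def r_def add_divide_distrib msum_nonneg)
    finally show "norm (F (x + h) *v w (x + h) - F x *v w x - F x *v w' h) / norm h \<le> g h" .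
  qed
  show "(\<lambda>h. norm (F (x + h) *v w (x + h) - F x *v w x - F x *v w' h) / norm h) \<midarrow>0\<rightarrow> 0"
    by (rule Lim_null_comparison[OF ev g0])
qed

lemma tr_inner1: "((A::real^'n^'m) *v x) \<bullet> y = (transpose A *v y) \<bullet> x"
proof -
  have "(transpose A *v y) \<bullet> x = (y v* A) \<bullet> x" by simp
  also have "\<dots> = y \<bullet> (A *v x)" by (rule dot_lmul_matrix)
  also have "\<dots> = (A *v x) \<bullet> y" by (rule inner_commute)
  finally show ?thesis by simp
qed

lemma tr_inner2: "a \<bullet> ((A::real^'n^'m) *v b) = (transpose A *v a) \<bullet> b"
  by (simp add: dot_lmul_matrix)

lemma tendsto_transpose: "(F \<longlongrightarrow> (A::real^'n^'m)) net \<Longrightarrow> ((\<lambda>y. transpose (F y)) \<longlongrightarrow> transpose A) net"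
  unfolding transpose_def
  by (intro tendsto_vec_lambda tendsto_vec_nth)

lemma tendsto_mm: "(F \<longlongrightarrow> (A::real^'n^'m)) net \<Longrightarrow> (G \<longlongrightarrow> (B::real^'k^'n)) net
   \<Longrightarrow> ((\<lambda>y. F y ** G y) \<longlongrightarrow> A ** B) net"
  unfolding matrix_matrix_mult_def
  by (intro tendsto_vec_lambda tendsto_sum tendsto_mult tendsto_vec_nth)

lemma tendsto_Lm:
  fixes A :: "real^('p::finite+'q::finite)^('p+'q)"
  shows "(F \<longlongrightarrow> A) net \<Longrightarrow> ((\<lambda>y. Lm (F y)) \<longlongrightarrow> Lm A) net"
  unfolding Lm_def
proof (intro tendsto_vec_lambda)
  fix k :: "'p + 'q" assume F: "(F \<longlongrightarrow> A) net"
  show "((\<lambda>y. case k of Inl i \<Rightarrow> F y $ Inl i | Inr j \<Rightarrow> axis (Inr j) 1) \<longlongrightarrow>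
          (case k of Inl i \<Rightarrow> A $ Inl i | Inr j \<Rightarrow> axis (Inr j) 1)) net"
    by (cases k) (auto intro: tendsto_vec_nth F)
qed

lemma Lm_Inl: "(Lm V *v x) $ Inl i = (V *v x) $ Inl i"
  by (simp add: Lm_def matrix_vector_mult_def)

lemma Lm_Inr: "(Lm V *v x) $ Inr j = x $ Inr j"
  using arg_cong[OF pv_Lm[of V x], of "\<lambda>v. v $ j"] by (simp add: pv_def)

locale EF2 = EF \<nu> for \<nu> :: "(real^('p::finite+'q::finite)) measure"
begin

definition Phi :: "real^('p+'q) \<Rightarrow> real^('p+'q)" where
  "Phi \<theta> = (\<chi> k. case k of Inl i \<Rightarrow> mean_param \<nu> \<theta> $ Inl i | Inr j \<Rightarrow> \<theta> $ Inr j)"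

lemma Vf_sym: "transpose (Vf \<nu> \<theta>) = Vf \<nu> \<theta>"
  by (simp add: transpose_def Vf_def Sf_def vec_eq_iff mult.commute)

lemma blockV: "\<theta> \<in> N \<Longrightarrow> blockV (Vf \<nu> \<theta>)"
  by unfold_locales (auto simp: Vf_sym pos_def)

lemma Phi_deriv:
  assumes th: "\<theta> \<in> N"
  shows "(Phi has_derivative (\<lambda>h. Lm (Vf \<nu> \<theta>) *v h)) (at \<theta>)"
proof (rule has_derivative_cart_comp)
  fix k :: "'p + 'q"
  show "((\<lambda>x. Phi x $ k) has_derivative (\<lambda>h. (Lm (Vf \<nu> \<theta>) *v h) $ k)) (at \<theta>)"
  proof (cases k)
    case (Inl i)
    have "((\<lambda>x. mean_param \<nu> x $ Inl i) has_derivative (\<lambda>h. (Vf \<nu> \<theta> *v h) $ Inl i)) (at \<theta>)"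
      using bounded_linear.has_derivative[OF bounded_linear_vec_nth deriv_mean[OF th]] .
    then show ?thesis by (simp add: Inl Phi_def Lm_Inl)
  next
    case (Inr j)
    have "((\<lambda>x. x $ Inr j) has_derivative (\<lambda>h. h $ Inr j)) (at \<theta>)"
      using bounded_linear.has_derivative[OF bounded_linear_vec_nth has_derivative_ident] .
    then show ?thesis by (simp add: Inr Phi_def Lm_Inr)
  qed
qed

lemma Phi_cont: "continuous_on N Phi"
  using Phi_deriv has_derivative_continuous continuous_at_imp_continuous_on by blast

lemma Phi_eqD:
  assumes "Phi x = Phi y"
  shows "\<And>i. mean_param \<nu> x $ Inl i = mean_param \<nu> y $ Inl i" "\<And>j. x $ Inr j = y $ Inr j"
  using assms by (auto simp: Phi_def vec_eq_iff dest: spec[of _ "Inl _"] spec[of _ "Inr _"])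

lemma Phi_inj: "inj_on Phi N"
proof (rule inj_onI)
  fix x y assume x: "x \<in> N" and y: "y \<in> N" and eq: "Phi x = Phi y"
  show "x = y"
  proof (rule ccontr)
    assume "x \<noteq> y"
    then have pos: "(y - x) \<bullet> (muf \<nu> y - muf \<nu> x) > 0" using mono_strict[OF x y] by simp
    have "(y - x) \<bullet> (muf \<nu> y - muf \<nu> x) = (\<Sum>k\<in>UNIV. (y - x) $ k * (muf \<nu> y - muf \<nu> x) $ k)"
      by (simp add: inner_vec_def)
    also have "\<dots> = 0"
    proof (rule sum.neutral, intro ballI)
      fix k :: "'p + 'q"
      show "(y - x) $ k * (muf \<nu> y - muf \<nu> x) $ k = 0"
        using Phi_eqD[OF eq] by (cases k) (auto simp: mean_eq[OF x, symmetric] mean_eq[OF y, symmetric])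
    qed
    finally show False using pos by simp
  qed
qed

lemma mixed_Phi: assumes th: "\<theta> \<in> N" shows "mixed_to_canon \<nu> (Phi \<theta>) = \<theta>"
  unfolding mixed_to_canon_def
proof (rule the_equality)
  show "\<theta> \<in> N \<and> (\<forall>i. mean_param \<nu> \<theta> $ Inl i = Phi \<theta> $ Inl i) \<and> (\<forall>j. \<theta> $ Inr j = Phi \<theta> $ Inr j)"
    using th by (simp add: Phi_def)
  fix \<theta>' assume h: "\<theta>' \<in> N \<and> (\<forall>i. mean_param \<nu> \<theta>' $ Inl i = Phi \<theta> $ Inl i) \<and> (\<forall>j. \<theta>' $ Inr j = Phi \<theta> $ Inr j)"
  have "Phi \<theta>' = Phi \<theta>"
  proof -
    have "Phi \<theta>' $ k = Phi \<theta> $ k" for k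
      using h by (cases k) (auto simp: Phi_def)
    then show ?thesis by (simp add: vec_eq_iff)
  qed
  then show "\<theta>' = \<theta>" using Phi_inj th h by (auto dest: inj_onD)
qed

abbreviation "U \<equiv> Phi ` N"

lemma U_open: "open U"
  by (rule invariance_of_domain[OF Phi_cont opn Phi_inj])

abbreviation "g \<equiv> mixed_to_canon \<nu>"

lemma g_in: "\<psi> \<in> U \<Longrightarrow> g \<psi> \<in> N" and Phi_g: "\<psi> \<in> U \<Longrightarrow> Phi (g \<psi>) = \<psi>"
  by (auto simp: mixed_Phi)

definition J :: "real^('p+'q) \<Rightarrow> real^('p+'q)^('p+'q)" where
  "J \<psi> = matrix_inv (Lm (Vf \<nu> (g \<psi>)))"

lemma g_deriv:
  assumes psi: "\<psi> \<in> U"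
  shows "(g has_derivative (\<lambda>h. J \<psi> *v h)) (at \<psi>)"
proof -
  define \<theta> where "\<theta> = g \<psi>"
  have th: "\<theta> \<in> N" using g_in[OF psi] by (simp add: \<theta>_def)
  have ps: "Phi \<theta> = \<psi>" using Phi_g[OF psi] by (simp add: \<theta>_def)
  interpret B: blockV "Vf \<nu> \<theta>" by (rule blockV[OF th])
  have "(g has_derivative (\<lambda>h. matrix_inv (Lm (Vf \<nu> \<theta>)) *v h)) (at (Phi \<theta>))"
  proof (rule has_derivative_inverse_strong[OF opn th Phi_cont])
    show "\<And>x. x \<in> N \<Longrightarrow> g (Phi x) = x" by (rule mixed_Phi)
    show "(Phi has_derivative (*v) (Lm (Vf \<nu> \<theta>))) (at \<theta>)"
      by (rule Phi_deriv[OF th])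
    show "(*v) (Lm (Vf \<nu> \<theta>)) \<circ> (\<lambda>h. matrix_inv (Lm (Vf \<nu> \<theta>)) *v h) = id"
      using inv_mult_cancel(1)[OF B.L_inv] by (auto simp: o_def)
  qed
  then have "(g has_derivative (\<lambda>h. matrix_inv (Lm (Vf \<nu> \<theta>)) *v h)) (at \<psi>)" by (simp only: ps)
  then show ?thesis by (simp add: J_def \<theta>_def)
qed

lemma g_cont: "\<psi> \<in> U \<Longrightarrow> isCont g \<psi>"
  by (rule has_derivative_continuous[OF g_deriv])

lemma Vg_cont:
  assumes psi: "\<psi> \<in> U"
  shows "isCont (\<lambda>y. Vf \<nu> (g y)) \<psi>"
  using isCont_tendsto_compose[OF cont_V[OF g_in[OF psi]] g_cont[OF psi, unfolded isCont_def]]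
  by (simp add: isCont_def)

lemma J_cont:
  assumes psi: "\<psi> \<in> U"
  shows "isCont J \<psi>"
proof -
  define \<theta> where "\<theta> = g \<psi>"
  have th: "\<theta> \<in> N" using g_in[OF psi] by (simp add: \<theta>_def)
  interpret B: blockV "Vf \<nu> \<theta>" by (rule blockV[OF th])
  have "((\<lambda>y. Vf \<nu> (g y)) \<longlongrightarrow> Vf \<nu> (g \<psi>)) (at \<psi>)"
    using Vg_cont[OF psi] by (simp add: isCont_def)
  then have "((\<lambda>y. Lm (Vf \<nu> (g y))) \<longlongrightarrow> Lm (Vf \<nu> \<theta>)) (at \<psi>)"
    unfolding \<theta>_def by (rule tendsto_Lm)
  then have "((\<lambda>y. matrix_inv (Lm (Vf \<nu> (g y)))) \<longlongrightarrow> matrix_inv (Lm (Vf \<nu> \<theta>))) (at \<psi>)"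
    by (rule tendsto_matrix_inv[OF _ B.L_inv])
  moreover have Jeq: "J = (\<lambda>y. matrix_inv (Lm (Vf \<nu> (g y))))" by (rule ext) (simp add: J_def)
  ultimately show ?thesis unfolding isCont_def by (simp add: \<theta>_def)
qed

end

lemma mv_uminus_left: "(- (A::real^'n^'m)) *v x = - (A *v x)"
  by (simp add: matrix_vector_mult_def vec_eq_iff sum_negf)

context EF2
begin

lemma loglik_part:
  assumes th0: "\<theta>0 \<in> N"
  shows "has_grad_hess (\<lambda>\<psi>. mixed_loglik \<nu> \<psi> (mean_param \<nu> \<theta>0)) (Phi \<theta>0) 0
           (- (transpose (J (Phi \<theta>0)) ** Vf \<nu> \<theta>0 ** J (Phi \<theta>0)))"
proof -
  define t where "t = mean_param \<nu> \<theta>0"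
  define \<psi>0 where "\<psi>0 = Phi \<theta>0"
  have psi0: "\<psi>0 \<in> U" using th0 by (simp add: \<psi>0_def)
  have g0: "g \<psi>0 = \<theta>0" using th0 by (simp add: \<psi>0_def mixed_Phi)
  define G where "G \<psi> = transpose (J \<psi>) *v (t - muf \<nu> (g \<psi>))" for \<psi>
  have der: "((\<lambda>\<psi>. mixed_loglik \<nu> \<psi> t) has_derivative (\<lambda>h. G \<psi> \<bullet> h)) (at \<psi>)" if psi: "\<psi> \<in> U" for \<psi>
  proof -
    have th: "g \<psi> \<in> N" by (rule g_in[OF psi])
    have dl: "((\<lambda>\<theta>. \<theta> \<bullet> t - cumulant \<nu> \<theta>) has_derivative (\<lambda>k. k \<bullet> t - k \<bullet> muf \<nu> (g \<psi>))) (at (g \<psi>))"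
      by (intro has_derivative_diff has_derivative_inner_left[OF has_derivative_ident] deriv_cumulant[OF th])
    have d1: "((\<lambda>x. g x \<bullet> t - cumulant \<nu> (g x)) has_derivative
        (\<lambda>h. (J \<psi> *v h) \<bullet> t - (J \<psi> *v h) \<bullet> muf \<nu> (g \<psi>))) (at \<psi>)"
      using has_derivative_compose[OF g_deriv[OF psi] dl] .
    have e2: "(\<lambda>h. (J \<psi> *v h) \<bullet> t - (J \<psi> *v h) \<bullet> muf \<nu> (g \<psi>)) = (\<lambda>h. G \<psi> \<bullet> h)"
    proof
      fix h
      have "(J \<psi> *v h) \<bullet> t - (J \<psi> *v h) \<bullet> muf \<nu> (g \<psi>) = (J \<psi> *v h) \<bullet> (t - muf \<nu> (g \<psi>))"
        by (simp add: inner_diff_right)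
      also have "\<dots> = (transpose (J \<psi>) *v (t - muf \<nu> (g \<psi>))) \<bullet> h" by (rule tr_inner1)
      also have "\<dots> = G \<psi> \<bullet> h" by (simp only: G_def)
      finally show "(J \<psi> *v h) \<bullet> t - (J \<psi> *v h) \<bullet> muf \<nu> (g \<psi>) = G \<psi> \<bullet> h" .
    qed
    have e3: "(\<lambda>\<psi>. mixed_loglik \<nu> \<psi> t) = (\<lambda>x. g x \<bullet> t - cumulant \<nu> (g x))"
      by (simp add: mixed_loglik_def loglik_def fun_eq_iff)
    show ?thesis unfolding e3 by (rule has_derivative_eq_rhs[OF d1 e2])
  qed
  have ev: "\<forall>\<^sub>F y in nhds \<psi>0. ((\<lambda>\<psi>. mixed_loglik \<nu> \<psi> t) has_derivative (\<lambda>h. G y \<bullet> h)) (at y)"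
    unfolding eventually_nhds by (intro exI[of _ U] conjI U_open psi0 ballI der)
  have mu0: "muf \<nu> \<theta>0 = t" by (simp add: t_def mean_eq[OF th0])
  have G0: "G \<psi>0 = 0" by (simp add: G_def g0 mu0)
  have cF: "isCont (\<lambda>\<psi>. transpose (J \<psi>)) \<psi>0"
    using J_cont[OF psi0] unfolding isCont_def by (rule tendsto_transpose)
  have dw: "((\<lambda>\<psi>. t - muf \<nu> (g \<psi>)) has_derivative (\<lambda>h. 0 - Vf \<nu> (g \<psi>0) *v (J \<psi>0 *v h))) (at \<psi>0)"
    by (intro has_derivative_diff has_derivative_const has_derivative_compose[OF g_deriv[OF psi0] deriv_mu[OF g_in[OF psi0]]])
  have w0: "t - muf \<nu> (g \<psi>0) = 0" by (simp add: g0 mu0)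
  have d1: "(G has_derivative (\<lambda>h. transpose (J \<psi>0) *v (0 - Vf \<nu> (g \<psi>0) *v (J \<psi>0 *v h)))) (at \<psi>0)"
    unfolding G_def[abs_def] by (rule prod_deriv[OF cF dw w0])
  have e2: "(\<lambda>h. transpose (J \<psi>0) *v (0 - Vf \<nu> (g \<psi>0) *v (J \<psi>0 *v h)))
      = (\<lambda>h. (- (transpose (J \<psi>0) ** Vf \<nu> \<theta>0 ** J \<psi>0)) *v h)"
    by (simp add: g0 mv_uminus_left mv_neg matrix_vector_mul_assoc matrix_mul_assoc)
  have d2: "(G has_derivative (\<lambda>h. (- (transpose (J \<psi>0) ** Vf \<nu> \<theta>0 ** J \<psi>0)) *v h)) (at \<psi>0)"
    by (rule has_derivative_eq_rhs[OF d1 e2])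
  show ?thesis
    unfolding has_grad_hess_def t_def[symmetric] \<psi>0_def[symmetric]
    by (intro exI[of _ G] conjI ev G0 d2)
qed

lemma dual_part:
  assumes th0: "\<theta>0 \<in> N"
  shows "has_grad_hess (\<lambda>\<psi>. mixed_dual_loglik \<nu> \<psi> (mean_param \<nu> \<theta>0)) (Phi \<theta>0) 0
           (- (transpose (J (Phi \<theta>0)) ** Vf \<nu> \<theta>0 ** J (Phi \<theta>0)))"
proof -
  define t where "t = mean_param \<nu> \<theta>0"
  define \<psi>0 where "\<psi>0 = Phi \<theta>0"
  have psi0: "\<psi>0 \<in> U" using th0 by (simp add: \<psi>0_def)
  have g0: "g \<psi>0 = \<theta>0" using th0 by (simp add: \<psi>0_def mixed_Phi)
  have ct: "canon_of_mean \<nu> t = \<theta>0" using canon_of_mean_eq[OF th0] by (simp add: t_def)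
  define H2 where "H2 \<theta> = \<theta>0 \<bullet> mean_param \<nu> \<theta> - (\<theta> \<bullet> mean_param \<nu> \<theta> - cumulant \<nu> \<theta>)" for \<theta>
  define G where "G \<psi> = (transpose (J \<psi>) ** transpose (Vf \<nu> (g \<psi>))) *v (\<theta>0 - g \<psi>)" for \<psi>
  have feq: "mixed_dual_loglik \<nu> \<psi> t = H2 (g \<psi>)" if "\<psi> \<in> U" for \<psi>
    using g_in[OF that] by (simp add: mixed_dual_loglik_def dual_loglik_def ct fenchel_eq H2_def)
  have der: "((\<lambda>\<psi>. mixed_dual_loglik \<nu> \<psi> t) has_derivative (\<lambda>h. G \<psi> \<bullet> h)) (at \<psi>)" if psi: "\<psi> \<in> U" for \<psi>
  proof -
    define \<theta> where "\<theta> = g \<psi>"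
    have th: "\<theta> \<in> N" unfolding \<theta>_def by (rule g_in[OF psi])
    have dm: "(mean_param \<nu> has_derivative (\<lambda>h. Vf \<nu> \<theta> *v h)) (at \<theta>)" by (rule deriv_mean[OF th])
    have dH: "(H2 has_derivative (\<lambda>k. \<theta>0 \<bullet> (Vf \<nu> \<theta> *v k) - ((\<theta> \<bullet> (Vf \<nu> \<theta> *v k) + k \<bullet> mean_param \<nu> \<theta>) - k \<bullet> muf \<nu> \<theta>))) (at \<theta>)"
      unfolding H2_def[abs_def]
      by (intro has_derivative_diff has_derivative_inner_right[OF dm] deriv_cumulant[OF th]
          has_derivative_inner[OF has_derivative_ident dm, THEN has_derivative_eq_rhs]) (simp add: fun_eq_iff)
    have "(\<lambda>k. \<theta>0 \<bullet> (Vf \<nu> \<theta> *v k) - ((\<theta> \<bullet> (Vf \<nu> \<theta> *v k) + k \<bullet> mean_param \<nu> \<theta>) - k \<bullet> muf \<nu> \<theta>))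
        = (\<lambda>k. (\<theta>0 - \<theta>) \<bullet> (Vf \<nu> \<theta> *v k))"
      by (simp add: fun_eq_iff mean_eq[OF th] inner_diff_left)
    with dH have dH': "(H2 has_derivative (\<lambda>k. (\<theta>0 - \<theta>) \<bullet> (Vf \<nu> \<theta> *v k))) (at \<theta>)" by (rule has_derivative_eq_rhs)
    have d1: "((\<lambda>x. H2 (g x)) has_derivative (\<lambda>h. (\<theta>0 - \<theta>) \<bullet> (Vf \<nu> \<theta> *v (J \<psi> *v h)))) (at \<psi>)"
      using has_derivative_compose[OF g_deriv[OF psi] dH'[unfolded \<theta>_def]] by (simp only: \<theta>_def)
    have e2: "(\<lambda>h. (\<theta>0 - \<theta>) \<bullet> (Vf \<nu> \<theta> *v (J \<psi> *v h))) = (\<lambda>h. G \<psi> \<bullet> h)"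
    proof
      fix h
      have "(\<theta>0 - \<theta>) \<bullet> (Vf \<nu> \<theta> *v (J \<psi> *v h)) = (transpose (Vf \<nu> \<theta>) *v (\<theta>0 - \<theta>)) \<bullet> (J \<psi> *v h)"
        by (rule tr_inner2)
      also have "\<dots> = (J \<psi> *v h) \<bullet> (transpose (Vf \<nu> \<theta>) *v (\<theta>0 - \<theta>))" by (rule inner_commute)
      also have "\<dots> = (transpose (J \<psi>) *v (transpose (Vf \<nu> \<theta>) *v (\<theta>0 - \<theta>))) \<bullet> h" by (rule tr_inner1)
      also have "\<dots> = G \<psi> \<bullet> h" by (simp only: G_def \<theta>_def matrix_vector_mul_assoc)
      finally show "(\<theta>0 - \<theta>) \<bullet> (Vf \<nu> \<theta> *v (J \<psi> *v h)) = G \<psi> \<bullet> h" .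
    qed
    have "((\<lambda>x. H2 (g x)) has_derivative (\<lambda>h. G \<psi> \<bullet> h)) (at \<psi>)" by (rule has_derivative_eq_rhs[OF d1 e2])
    then show ?thesis
      by (rule has_derivative_transform_within_open[OF _ U_open psi]) (simp add: feq)
  qed
  have ev: "\<forall>\<^sub>F y in nhds \<psi>0. ((\<lambda>\<psi>. mixed_dual_loglik \<nu> \<psi> t) has_derivative (\<lambda>h. G y \<bullet> h)) (at y)"
    unfolding eventually_nhds by (intro exI[of _ U] conjI U_open psi0 ballI der)
  have G0: "G \<psi>0 = 0" by (simp add: G_def g0)
  have cF: "isCont (\<lambda>\<psi>. transpose (J \<psi>) ** transpose (Vf \<nu> (g \<psi>))) \<psi>0"
    unfolding isCont_def
    by (intro tendsto_mm tendsto_transpose J_cont[OF psi0, unfolded isCont_def] Vg_cont[OF psi0, unfolded isCont_def])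
  have dw: "((\<lambda>\<psi>. \<theta>0 - g \<psi>) has_derivative (\<lambda>h. 0 - J \<psi>0 *v h)) (at \<psi>0)"
    by (intro has_derivative_diff has_derivative_const g_deriv[OF psi0])
  have w0: "\<theta>0 - g \<psi>0 = 0" by (simp add: g0)
  have d1: "(G has_derivative (\<lambda>h. (transpose (J \<psi>0) ** transpose (Vf \<nu> (g \<psi>0))) *v (0 - J \<psi>0 *v h))) (at \<psi>0)"
    unfolding G_def[abs_def] by (rule prod_deriv[OF cF dw w0])
  have e2: "(\<lambda>h. (transpose (J \<psi>0) ** transpose (Vf \<nu> (g \<psi>0))) *v (0 - J \<psi>0 *v h))
      = (\<lambda>h. (- (transpose (J \<psi>0) ** Vf \<nu> \<theta>0 ** J \<psi>0)) *v h)"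
    by (simp add: g0 Vf_sym mv_uminus_left mv_neg matrix_vector_mul_assoc)
  have d2: "(G has_derivative (\<lambda>h. (- (transpose (J \<psi>0) ** Vf \<nu> \<theta>0 ** J \<psi>0)) *v h)) (at \<psi>0)"
    by (rule has_derivative_eq_rhs[OF d1 e2])
  show ?thesis
    unfolding has_grad_hess_def t_def[symmetric] \<psi>0_def[symmetric]
    by (intro exI[of _ G] conjI ev G0 d2)
qed

lemma hess_identity:
  assumes th0: "\<theta>0 \<in> N"
  shows "transpose (J (Phi \<theta>0)) ** Vf \<nu> \<theta>0 ** J (Phi \<theta>0)
     = block_diag (matrix_inv (uu_block (var_matrix \<nu> \<theta>0))) (matrix_inv (vv_block (matrix_inv (var_matrix \<nu> \<theta>0))))"
proof -
  interpret B: blockV "Vf \<nu> \<theta>0" by (rule blockV[OF th0])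
  show ?thesis using B.main_identity
    by (simp add: J_def mixed_Phi[OF th0] var_eq[OF th0])
qed

end

theorem lemmaA6:
  fixes \<nu> :: "(real^('p::finite + 'q::finite)) measure"
    and t :: "real^('p + 'q)"
  assumes "regular_ef \<nu>"
    and "minimal_ef \<nu>"
    and "t \<in> mean_space \<nu>"
  shows "let \<theta>bar = canon_of_mean \<nu> t;
             \<psi>bar = (\<chi> k. case k of Inl i \<Rightarrow> t $ Inl i | Inr j \<Rightarrow> \<theta>bar $ Inr j);
             V = var_matrix \<nu> \<theta>bar;
             H = - block_diag (matrix_inv (uu_block V)) (matrix_inv (vv_block (matrix_inv V)))
         in has_grad_hess (\<lambda>\<psi>. mixed_loglik \<nu> \<psi> t) \<psi>bar 0 H
          \<and> has_grad_hess (\<lambda>\<psi>. mixed_dual_loglik \<nu> \<psi> t) \<psi>bar 0 H"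
proof -
  have sets: "sets \<nu> = sets borel" and opn: "open (nat_param_space \<nu>)"
    using assms(1) by (auto simp: regular_ef_def)
  interpret E: EF2 \<nu> by unfold_locales (use sets opn assms(2) in auto)
  obtain \<theta>0 where th0: "\<theta>0 \<in> nat_param_space \<nu>" and t: "t = mean_param \<nu> \<theta>0"
    using assms(3) by (auto simp: mean_space_def)
  have ct: "canon_of_mean \<nu> t = \<theta>0" using E.canon_of_mean_eq[OF th0] by (simp add: t)
  have psi: "(\<chi> k. case k of Inl i \<Rightarrow> t $ Inl i | Inr j \<Rightarrow> \<theta>0 $ Inr j) = E.Phi \<theta>0"
    unfolding t E.Phi_def by (rule refl)
  show ?thesis
    unfolding Let_def ct psi
    using E.loglik_part[OF th0] E.dual_part[OF th0] E.hess_identity[OF th0]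
    by (simp add: t)
qed

end
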